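(* Let $d$ be prime, $n\ge1$, $G$ nontrivial and invertible over $\mathbb Z_d$, and let $\Lambda_1,\Lambda_2$ be $n$-qudit quantum channels. Then the convolution $\Lambda_1\boxtimes\Lambda_2$ (the channel whose Choi state is $J_{\Lambda_1}\boxtimes J_{\Lambda_2}$) is well defined and satisfies $$\Lambda_1\boxtimes\Lambda_2=\mathcal E\circ(\Lambda_1\otimes\Lambda_2)\circ\mathcal E^{-1},$$ where $\mathcal E(\cdot)=\mathrm{Tr}_B[U(\cdot)U^\dagger]$ and $\mathcal E^{-1}(\rho)=U^\dagger(\rho\otimes I_n/d^n)U$.
   Context: Fix a prime $d$. $G=\begin{pmatrix}g_{00}&g_{01}\\ g_{10}&g_{11}\end{pmatrix}$ over $\mathbb Z_d$, $\det G\not\equiv 0$, $N=(\det G)^{-1}$; nontrivial means at most one entry is $0$ mod $d$. For any $m$, the key unitary on $(\mathbb C^d)^{\otimes m}\otimes(\mathbb C^d)^{\otimes m}$ is $U|\vec i\rangle|\vec j\rangle=|Ng_{11}\vec i-Ng_{10}\vec j\rangle|-Ng_{01}\vec i+Ng_{00}\vec j\rangle$ ($\vec i,\vec j\in\mathbb Z_d^m$), and for $m$-qudit states $\rho\boxtimes\sigma=\mathrm{Tr}_B[U(\rho\otimes\sigma)U^\dagger]$. The Choi state of an $n$-qudit channel $\Lambda$ is the $2n$-qudit state $J_\Lambda=(\mathrm{id}_A\otimes\Lambda)(|\Phi\rangle\langle\Phi|)$ with $|\Phi\rangle=d^{-n/2}\sum_{\vec j\in\mathbb Z_d^n}|\vec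 j\rangle_A|\vec j\rangle_{A'}$, so that $\Lambda(\rho)=d^n\mathrm{Tr}_A[J_\Lambda(\rho^T\otimes I)]$. The convolution $J_{\Lambda_1}\boxtimes J_{\Lambda_2}$ is taken with $m=2n$ (the $2n$ qudits of $AA'$), and $\Lambda_1\boxtimes\Lambda_2$ is the map $\rho\mapsto d^n\mathrm{Tr}_A[(J_{\Lambda_1}\boxtimes J_{\Lambda_2})(\rho^T\otimes I)]$. In $\mathcal E$, $U$ is the key unitary with $m=n$. *)

theory Defs
  imports Complex_Main "HOL-Computational_Algebra.Primes"
begin

text \<open>
  Operators on m qudits (Hilbert space (C^d)^{\<otimes> m}) are represented by their matrix
  elements in the computational basis: a kernel K with K x y = <x|K|y>, where basis
  vectors are lists x of length m with entries in {0..<d} (i.e. elements of Z_d^m).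
  A composite system of m+k qudits is indexed by concatenated lists x @ y.
\<close>

type_synonym qop = "nat list \<Rightarrow> nat list \<Rightarrow> complex"

definition basis :: "nat \<Rightarrow> nat \<Rightarrow> nat list set" where
  "basis d m = {xs. length xs = m \<and> (\<forall>x\<in>set xs. x < d)}"

definition is_op :: "nat \<Rightarrow> nat \<Rightarrow> qop \<Rightarrow> bool" where
  "is_op d m A \<longleftrightarrow> (\<forall>x y. (x \<notin> basis d m \<or> y \<notin> basis d m) \<longrightarrow> A x y = 0)"

definition mmul :: "nat \<Rightarrow> nat \<Rightarrow> qop \<Rightarrow> qop \<Rightarrow> qop" where
  "mmul d m A B = (\<lambda>x y. \<Sum>z\<in>basis d m. A x z * B z y)"

definition adj :: "qop \<Rightarrow> qop" where
  "adj A = (\<lambda>x y. cnj (A y x))"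

definition transp :: "qop \<Rightarrow> qop" where
  "transp A = (\<lambda>x y. A y x)"

definition ident :: "nat \<Rightarrow> nat \<Rightarrow> qop" where
  "ident d m = (\<lambda>x y. if x = y \<and> x \<in> basis d m then 1 else 0)"

definition trace :: "nat \<Rightarrow> nat \<Rightarrow> qop \<Rightarrow> complex" where
  "trace d m A = (\<Sum>x\<in>basis d m. A x x)"

definition tens :: "nat \<Rightarrow> qop \<Rightarrow> qop \<Rightarrow> qop" where
  "tens m A B = (\<lambda>x y. A (take m x) (take m y) * B (drop m x) (drop m y))"

definition ptrace_B :: "nat \<Rightarrow> nat \<Rightarrow> qop \<Rightarrow> qop" where
  "ptrace_B d k X = (\<lambda>x y. \<Sum>z\<in>basis d k. X (x @ z) (y @ z))"

definition ptrace_A :: "nat \<Rightarrow> nat \<Rightarrow> qop \<Rightarrow> qop" where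
  "ptrace_A d m X = (\<lambda>x y. \<Sum>z\<in>basis d m. X (z @ x) (z @ y))"

definition psd :: "nat \<Rightarrow> nat \<Rightarrow> qop \<Rightarrow> bool" where
  "psd d m A \<longleftrightarrow> is_op d m A \<and>
     (\<forall>v :: nat list \<Rightarrow> complex.
        let q = (\<Sum>x\<in>basis d m. \<Sum>y\<in>basis d m. cnj (v x) * A x y * v y)
        in Im q = 0 \<and> Re q \<ge> 0)"

text \<open>id_k \<otimes> \<Lambda> for a linear map \<Lambda> on n-qudit operators, applied to an operator on
  k+n qudits (\<Lambda> acts blockwise on the last n qudits).\<close>
definition idtensor :: "nat \<Rightarrow> (qop \<Rightarrow> qop) \<Rightarrow> qop \<Rightarrow> qop" where
  "idtensor k \<Lambda> X = (\<lambda>x y. \<Lambda> (\<lambda>x' y'. X (take k x @ x') (take k y @ y')) (drop k x) (drop k y))"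

definition is_channel :: "nat \<Rightarrow> nat \<Rightarrow> (qop \<Rightarrow> qop) \<Rightarrow> bool" where
  "is_channel d n \<Lambda> \<longleftrightarrow>
     (\<forall>A B c. is_op d n A \<longrightarrow> is_op d n B \<longrightarrow>
        \<Lambda> (\<lambda>x y. c * A x y + B x y) = (\<lambda>x y. c * \<Lambda> A x y + \<Lambda> B x y)) \<and>
     (\<forall>A. is_op d n A \<longrightarrow> is_op d n (\<Lambda> A)) \<and>
     (\<forall>A. is_op d n A \<longrightarrow> trace d n (\<Lambda> A) = trace d n A) \<and>
     (\<forall>k X. psd d (k + n) X \<longrightarrow> psd d (k + n) (idtensor k \<Lambda> X))"

definition phi :: "nat \<Rightarrow> nat \<Rightarrow> qop" where
  "phi d n = (\<lambda>x y. if x \<in> basis d (2*n) \<and> y \<in> basis d (2*n) \<and>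
                       take n x = drop n x \<and> take n y = drop n y
                    then 1 / of_nat (d ^ n) else 0)"

definition choi :: "nat \<Rightarrow> nat \<Rightarrow> (qop \<Rightarrow> qop) \<Rightarrow> qop" where
  "choi d n \<Lambda> = idtensor n \<Lambda> (phi d n)"

definition chan_of_choi :: "nat \<Rightarrow> nat \<Rightarrow> qop \<Rightarrow> qop \<Rightarrow> qop" where
  "chan_of_choi d n J \<rho> =
     (\<lambda>x y. of_nat (d ^ n) * ptrace_A d n (mmul d (2*n) J (tens n (transp \<rho>) (ident d n))) x y)"

text \<open>G is given by its entries G i j (i,j \<in> {0,1}).\<close>
definition detG :: "(nat \<Rightarrow> nat \<Rightarrow> int) \<Rightarrow> int" where
  "detG G = G 0 0 * G 1 1 - G 0 1 * G 1 0"

definition invertible_G :: "nat \<Rightarrow> (nat \<Rightarrow> nat \<Rightarrow> int) \<Rightarrow> bool" where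
  "invertible_G d G \<longleftrightarrow> detG G mod int d \<noteq> 0"

definition nontrivial_G :: "nat \<Rightarrow> (nat \<Rightarrow> nat \<Rightarrow> int) \<Rightarrow> bool" where
  "nontrivial_G d G \<longleftrightarrow> card {(i, j). i < (2::nat) \<and> j < (2::nat) \<and> G i j mod int d = 0} \<le> 1"

definition zinv :: "nat \<Rightarrow> int \<Rightarrow> int" where
  "zinv d a = (SOME N. 0 \<le> N \<and> N < int d \<and> (N * a) mod int d = 1)"

definition keymap :: "nat \<Rightarrow> (nat \<Rightarrow> nat \<Rightarrow> int) \<Rightarrow> nat \<Rightarrow> nat list \<Rightarrow> nat list" where
  "keymap d G m a =
     (let N = zinv d (detG G); i = take m a; j = drop m a in
      map2 (\<lambda>u v. nat ((N * G 1 1 * int u - N * G 1 0 * int v) mod int d)) i j @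
      map2 (\<lambda>u v. nat ((- N * G 0 1 * int u + N * G 0 0 * int v) mod int d)) i j)"

definition Ukey :: "nat \<Rightarrow> (nat \<Rightarrow> nat \<Rightarrow> int) \<Rightarrow> nat \<Rightarrow> qop" where
  "Ukey d G m = (\<lambda>x a. if a \<in> basis d (2*m) \<and> x = keymap d G m a then 1 else 0)"

definition Emap :: "nat \<Rightarrow> (nat \<Rightarrow> nat \<Rightarrow> int) \<Rightarrow> nat \<Rightarrow> qop \<Rightarrow> qop" where
  "Emap d G m X = ptrace_B d m (mmul d (2*m) (mmul d (2*m) (Ukey d G m) X) (adj (Ukey d G m)))"

definition Einv :: "nat \<Rightarrow> (nat \<Rightarrow> nat \<Rightarrow> int) \<Rightarrow> nat \<Rightarrow> qop \<Rightarrow> qop" where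
  "Einv d G m \<rho> = mmul d (2*m) (mmul d (2*m) (adj (Ukey d G m))
        (\<lambda>x y. tens m \<rho> (ident d m) x y / of_nat (d ^ m))) (Ukey d G m)"

definition qconv :: "nat \<Rightarrow> (nat \<Rightarrow> nat \<Rightarrow> int) \<Rightarrow> nat \<Rightarrow> qop \<Rightarrow> qop \<Rightarrow> qop" where
  "qconv d G m \<rho> \<sigma> = Emap d G m (tens m \<rho> \<sigma>)"

definition chan_conv :: "nat \<Rightarrow> (nat \<Rightarrow> nat \<Rightarrow> int) \<Rightarrow> nat \<Rightarrow> (qop \<Rightarrow> qop) \<Rightarrow> (qop \<Rightarrow> qop) \<Rightarrow> qop \<Rightarrow> qop" where
  "chan_conv d G n \<Lambda>1 \<Lambda>2 = chan_of_choi d n (qconv d G (2*n) (choi d n \<Lambda>1) (choi d n \<Lambda>2))"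

text \<open>Tensor product \<Lambda>1 \<otimes> \<Lambda>2 of linear maps on n-qudit operators, defined by linear
  extension from matrix units: (\<Lambda>1 \<otimes> \<Lambda>2)(|a a'><b b'|) = \<Lambda>1(|a><b|) \<otimes> \<Lambda>2(|a'><b'|).\<close>
definition munit :: "nat \<Rightarrow> nat \<Rightarrow> nat list \<Rightarrow> nat list \<Rightarrow> qop" where
  "munit d n a b = (\<lambda>x y. if x = a \<and> y = b \<and> a \<in> basis d n \<and> b \<in> basis d n then 1 else 0)"

definition chan_tensor :: "nat \<Rightarrow> nat \<Rightarrow> (qop \<Rightarrow> qop) \<Rightarrow> (qop \<Rightarrow> qop) \<Rightarrow> qop \<Rightarrow> qop" where
  "chan_tensor d n \<Lambda>1 \<Lambda>2 X = (\<lambda>x y. \<Sum>a\<in>basis d (2*n). \<Sum>b\<in>basis d (2*n).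
      X a b * tens n (\<Lambda>1 (munit d n (take n a) (take n b)))
                     (\<Lambda>2 (munit d n (drop n a) (drop n b))) x y)"

end

theory Submission
  imports Defs "HOL-Number_Theory.Cong"
begin

lemma finite_basis[simp]: "finite (basis d m)"
proof -
  have "basis d m \<subseteq> {xs. set xs \<subseteq> {..<d} \<and> length xs = m}" by (auto simp: basis_def)
  moreover have "finite {xs. set xs \<subseteq> {..<d} \<and> length xs = m}" using finite_lists_length_eq by blast
  ultimately show ?thesis by (rule finite_subset)
qed

lemma basis_len: "x \<in> basis d m \<Longrightarrow> length x = m" by (simp add: basis_def)

lemma append_basis_iff: "length a = m \<Longrightarrow> (a @ b \<in> basis d (m + k)) = (a \<in> basis d m \<and> b \<in> basis d k)"
  by (auto simp: basis_def)

lemma append_in_basis: "a \<in> basis d m \<Longrightarrow> b \<in> basis d k \<Longrightarrow> a @ b \<in> basis d (m + k)"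
  by (auto simp: basis_def)

lemma take_in_basis: "x \<in> basis d (m + k) \<Longrightarrow> take m x \<in> basis d m"
  by (auto simp: basis_def dest: in_set_takeD)
lemma drop_in_basis: "x \<in> basis d (m + k) \<Longrightarrow> drop m x \<in> basis d k"
  by (auto simp: basis_def dest: in_set_dropD)

lemma sum_basis_add:
  "(\<Sum>x\<in>basis d (m + k). f x) = (\<Sum>a\<in>basis d m. \<Sum>b\<in>basis d k. f (a @ b))"
proof -
  have bij: "bij_betw (\<lambda>(a,b). a @ b) (basis d m \<times> basis d k) (basis d (m+k))"
    unfolding bij_betw_def
  proof
    show "inj_on (\<lambda>(a,b). a @ b) (basis d m \<times> basis d k)" by (auto simp: inj_on_def basis_def)
    show "(\<lambda>(a,b). a @ b) ` (basis d m \<times> basis d k) = basis d (m+k)"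
    proof
      show "(\<lambda>(a,b). a @ b) ` (basis d m \<times> basis d k) \<subseteq> basis d (m+k)" by (auto simp: basis_def)
      show "basis d (m+k) \<subseteq> (\<lambda>(a,b). a @ b) ` (basis d m \<times> basis d k)"
      proof
        fix x assume x: "x \<in> basis d (m+k)"
        then have "x = (\<lambda>(a,b). a @ b) (take m x, drop m x)" by simp
        moreover have "(take m x, drop m x) \<in> basis d m \<times> basis d k"
          using x take_in_basis drop_in_basis by blast
        ultimately show "x \<in> (\<lambda>(a,b). a @ b) ` (basis d m \<times> basis d k)" by blast
      qed
    qed
  qed
  have "(\<Sum>x\<in>basis d (m + k). f x) = (\<Sum>p\<in>basis d m \<times> basis d k. f ((\<lambda>(a,b). a @ b) p))"
    using sum.reindex_bij_betw[OF bij, of f] by simp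
  also have "\<dots> = (\<Sum>a\<in>basis d m. \<Sum>b\<in>basis d k. f (a @ b))"
    by (simp add: sum.cartesian_product split_def)
  finally show ?thesis .
qed

lemma sum_basis_double:
  "(\<Sum>x\<in>basis d (2*m). f x) = (\<Sum>a\<in>basis d m. \<Sum>b\<in>basis d m. f (a @ b))"
  using sum_basis_add[where d=d and m=m and k=m and f=f] by (simp add: mult_2)

lemma mmul_zero_col: "(\<forall>z\<in>basis d m. B z q = 0) \<Longrightarrow> mmul d m A B p q = 0"
  by (simp add: mmul_def)

lemma is_op_sum: "finite S \<Longrightarrow> (\<forall>i\<in>S. is_op d n (f i)) \<Longrightarrow> is_op d n (\<lambda>x y. \<Sum>i\<in>S. c i * f i x y)"
  by (auto simp: is_op_def intro!: sum.neutral)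

lemma is_op_lin: "is_op d n A \<Longrightarrow> is_op d n B \<Longrightarrow> is_op d n (\<lambda>x y. c * A x y + B x y)"
  by (auto simp: is_op_def)

lemma is_op_zero: "is_op d n (\<lambda>x y. 0)" by (simp add: is_op_def)

lemma ch_lin: "is_channel d n \<Lambda> \<Longrightarrow> is_op d n A \<Longrightarrow> is_op d n B \<Longrightarrow>
   \<Lambda> (\<lambda>x y. c * A x y + B x y) = (\<lambda>x y. c * \<Lambda> A x y + \<Lambda> B x y)"
  by (simp add: is_channel_def)

lemma ch_zero: assumes "is_channel d n \<Lambda>" shows "\<Lambda> (\<lambda>x y. 0) = (\<lambda>x y. 0)"
proof -
  have "\<Lambda> (\<lambda>x y. 1 * 0 + 0) = (\<lambda>x y. 1 * \<Lambda> (\<lambda>x y. 0) x y + \<Lambda> (\<lambda>x y. 0) x y)"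
    using ch_lin[OF assms is_op_zero is_op_zero, of 1] by simp
  then have "\<And>x y. \<Lambda> (\<lambda>x y. 0) x y = \<Lambda> (\<lambda>x y. 0) x y + \<Lambda> (\<lambda>x y. 0) x y"
    by (metis (no_types) add_0 mult_1 mult_zero_left)
  then show ?thesis by (intro ext) (metis add_cancel_right_right)
qed

lemma ch_scale: assumes "is_channel d n \<Lambda>" "is_op d n A"
  shows "\<Lambda> (\<lambda>x y. c * A x y) = (\<lambda>x y. c * \<Lambda> A x y)"
  using ch_lin[OF assms is_op_zero, of c] ch_zero[OF assms(1)] by simp

lemma ch_sum:
  assumes ch: "is_channel d n \<Lambda>"
  shows "finite S \<Longrightarrow> (\<forall>i\<in>S. is_op d n (f i)) \<Longrightarrow>
    \<Lambda> (\<lambda>x y. \<Sum>i\<in>S. c i * f i x y) = (\<lambda>x y. \<Sum>i\<in>S. c i * \<Lambda> (f i) x y)"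
proof (induction S rule: finite_induct)
  case empty then show ?case using ch_zero[OF ch] by simp
next
  case (insert j S)
  have "\<Lambda> (\<lambda>x y. \<Sum>i\<in>insert j S. c i * f i x y) = \<Lambda> (\<lambda>x y. c j * f j x y + (\<Sum>i\<in>S. c i * f i x y))"
    using insert by simp
  also have "\<dots> = (\<lambda>x y. c j * \<Lambda> (f j) x y + \<Lambda> (\<lambda>x y. \<Sum>i\<in>S. c i * f i x y) x y)"
  proof -
    have io: "is_op d n (\<lambda>x y. \<Sum>i\<in>S. c i * f i x y)" by (rule is_op_sum) (use insert in auto)
    have ij: "is_op d n (f j)" using insert by auto
    show ?thesis using ch_lin[OF ch ij io] by simp
  qed
  also have "\<dots> = (\<lambda>x y. \<Sum>i\<in>insert j S. c i * \<Lambda> (f i) x y)"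
    using insert by simp
  finally show ?case .
qed

lemma munit_is_op: "is_op d n (munit d n a b)" by (simp add: is_op_def munit_def)

lemma op_expand: assumes "is_op d n A"
  shows "A = (\<lambda>x y. \<Sum>p\<in>basis d n \<times> basis d n. A (fst p) (snd p) * munit d n (fst p) (snd p) x y)"
proof (intro ext)
  fix x y
  show "A x y = (\<Sum>p\<in>basis d n \<times> basis d n. A (fst p) (snd p) * munit d n (fst p) (snd p) x y)"
  proof (cases "x \<in> basis d n \<and> y \<in> basis d n")
    case True
    have "(\<Sum>p\<in>basis d n \<times> basis d n. A (fst p) (snd p) * munit d n (fst p) (snd p) x y)
        = (\<Sum>p\<in>basis d n \<times> basis d n. if p = (x,y) then A x y else 0)"
      by (rule sum.cong) (auto simp: munit_def)
    also have "\<dots> = A x y" using True by simp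
    finally show ?thesis by simp
  next
    case False
    then show ?thesis using assms by (auto simp: is_op_def munit_def intro!: sum.neutral)
  qed
qed

lemma ch_expand: assumes ch: "is_channel d n \<Lambda>" and A: "is_op d n A"
  shows "\<Lambda> A x y = (\<Sum>a\<in>basis d n. \<Sum>b\<in>basis d n. A a b * \<Lambda> (munit d n a b) x y)"
proof -
  have "\<Lambda> A = \<Lambda> (\<lambda>x y. \<Sum>p\<in>basis d n \<times> basis d n. A (fst p) (snd p) * munit d n (fst p) (snd p) x y)"
    using op_expand[OF A] by simp
  also have "\<dots> = (\<lambda>x y. \<Sum>p\<in>basis d n \<times> basis d n. A (fst p) (snd p) * \<Lambda> (munit d n (fst p) (snd p)) x y)"
    by (rule ch_sum[OF ch]) (auto simp: munit_is_op)
  finally show ?thesis by (simp add: sum.cartesian_product split_def)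
qed

lemma pre_basis: "a \<in> basis d m \<Longrightarrow> (a @ x \<in> basis d (2*m)) = (x \<in> basis d m)"
  by (auto simp: basis_def)

lemma phi_block: assumes p: "p \<in> basis d n" and q: "q \<in> basis d n"
  shows "phi d n (p @ x') (q @ y') = (1 / of_nat (d ^ n)) * munit d n p q x' y'"
proof -
  have lp: "length p = n" and lq: "length q = n" using p q by (auto simp: basis_def)
  show ?thesis using lp lq pre_basis[OF p] pre_basis[OF q] p q by (auto simp: phi_def munit_def)
qed

lemma choi_formula:
  assumes ch: "is_channel d n \<Lambda>" and a: "a \<in> basis d (2*n)" and b: "b \<in> basis d (2*n)"
  shows "choi d n \<Lambda> a b = \<Lambda> (munit d n (take n a) (take n b)) (drop n a) (drop n b) / of_nat (d ^ n)"
proof -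
  have ta: "take n a \<in> basis d n" and tb: "take n b \<in> basis d n"
    using take_in_basis[of a d n n] take_in_basis[of b d n n] a b by (auto simp: mult_2)
  have la: "length (take n a) = n" and lb: "length (take n b) = n" using basis_len[OF ta] basis_len[OF tb] by auto
  have blk: "(\<lambda>x' y'. phi d n (take n a @ x') (take n b @ y')) =
     (\<lambda>x' y'. (1 / of_nat (d ^ n)) * munit d n (take n a) (take n b) x' y')"
    by (intro ext) (simp add: phi_block[OF ta tb])
  show ?thesis unfolding choi_def idtensor_def blk ch_scale[OF ch munit_is_op] by simp
qed

lemma modlin: "(a * (x mod D) + b * (y mod D)) mod D = (a*x + b*y) mod (D::int)"
  by (metis mod_add_eq mod_mult_right_eq)

locale keysetup =
  fixes d :: nat and G :: "nat \<Rightarrow> nat \<Rightarrow> int"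
  assumes prime_d: "prime d" and invG: "invertible_G d G"
begin

definition "NN = zinv d (detG G)"

lemma d_gt1: "d > 1" using prime_d prime_gt_1_nat by blast

lemma NN_prop: "0 \<le> NN \<and> NN < int d \<and> (NN * detG G) mod int d = 1"
proof -
  have pr: "prime (int d)" using prime_d by simp
  have nd: "\<not> int d dvd detG G" using invG by (simp add: invertible_G_def dvd_eq_mod_eq_0)
  have "coprime (int d) (detG G)" using prime_imp_coprime[OF pr nd] .
  then have "coprime (detG G) (int d)" by (simp add: coprime_commute)
  then obtain x where x: "[detG G * x = 1] (mod int d)" using cong_solve_coprime_int by blast
  let ?N = "x mod int d"
  have "0 \<le> ?N \<and> ?N < int d \<and> (?N * detG G) mod int d = 1"
  proof -
    have "(?N * detG G) mod int d = (detG G * x) mod int d"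
      by (metis mod_mult_left_eq mult.commute)
    also have "\<dots> = 1 mod int d" using x by (simp add: cong_def)
    also have "\<dots> = 1" using d_gt1 by simp
    finally show ?thesis using d_gt1 by simp
  qed
  then have "\<exists>N. 0 \<le> N \<and> N < int d \<and> (N * detG G) mod int d = 1" by blast
  then show ?thesis unfolding NN_def zinv_def by (rule someI_ex)
qed

definition "ff u v = nat ((NN * G 1 1 * int u - NN * G 1 0 * int v) mod int d)"
definition "gg u v = nat ((- NN * G 0 1 * int u + NN * G 0 0 * int v) mod int d)"
definition "hf p q = nat ((G 0 0 * int p + G 1 0 * int q) mod int d)"
definition "kf p q = nat ((G 0 1 * int p + G 1 1 * int q) mod int d)"

lemma NNdet: "(NN * detG G * x) mod int d = x mod int d"
  by (metis NN_prop mod_mult_left_eq mult_1)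

lemma lt_d: "ff u v < d" "gg u v < d" "hf u v < d" "kf u v < d"
  using d_gt1 by (auto simp: ff_def gg_def hf_def kf_def nat_less_iff)

lemma pw:
  assumes "u < d" "v < d"
  shows "hf (ff u v) (gg u v) = u" "kf (ff u v) (gg u v) = v"
        "ff (hf u v) (kf u v) = u" "gg (hf u v) (kf u v) = v"
proof -
  have D: "int d > 0" using d_gt1 by simp
  have uu: "int u mod int d = int u" "int v mod int d = int v" using assms by auto
  have "int (hf (ff u v) (gg u v)) = int u"
  proof -
    have "int (hf (ff u v) (gg u v)) = (G 0 0 * ((NN * G 1 1 * int u - NN * G 1 0 * int v) mod int d)
        + G 1 0 * ((- NN * G 0 1 * int u + NN * G 0 0 * int v) mod int d)) mod int d"
      using D by (simp add: hf_def ff_def gg_def)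
    also have "\<dots> = (NN * detG G * int u) mod int d" unfolding modlin
      by (simp add: detG_def algebra_simps)
    finally show ?thesis using NNdet uu by simp
  qed
  then show "hf (ff u v) (gg u v) = u" by simp
  have "int (kf (ff u v) (gg u v)) = int v"
  proof -
    have "int (kf (ff u v) (gg u v)) = (G 0 1 * ((NN * G 1 1 * int u - NN * G 1 0 * int v) mod int d)
        + G 1 1 * ((- NN * G 0 1 * int u + NN * G 0 0 * int v) mod int d)) mod int d"
      using D by (simp add: kf_def ff_def gg_def)
    also have "\<dots> = (NN * detG G * int v) mod int d" unfolding modlin
      by (simp add: detG_def algebra_simps)
    finally show ?thesis using NNdet uu by simp
  qed
  then show "kf (ff u v) (gg u v) = v" by simp
  have "int (ff (hf u v) (kf u v)) = int u"
  proof -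
    have "int (ff (hf u v) (kf u v)) = ((NN * G 1 1) * ((G 0 0 * int u + G 1 0 * int v) mod int d)
        + (- NN * G 1 0) * ((G 0 1 * int u + G 1 1 * int v) mod int d)) mod int d"
      using D by (simp add: hf_def ff_def kf_def)
    also have "\<dots> = (NN * detG G * int u) mod int d" unfolding modlin
      by (simp add: detG_def algebra_simps)
    finally show ?thesis using NNdet uu by simp
  qed
  then show "ff (hf u v) (kf u v) = u" by simp
  have "int (gg (hf u v) (kf u v)) = int v"
  proof -
    have "int (gg (hf u v) (kf u v)) = ((- NN * G 0 1) * ((G 0 0 * int u + G 1 0 * int v) mod int d)
        + (NN * G 0 0) * ((G 0 1 * int u + G 1 1 * int v) mod int d)) mod int d"
      using D by (simp add: hf_def gg_def kf_def)
    also have "\<dots> = (NN * detG G * int v) mod int d" unfolding modlin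
      by (simp add: detG_def algebra_simps)
    finally show ?thesis using NNdet uu by simp
  qed
  then show "gg (hf u v) (kf u v) = v" by simp
qed


lemma keymap_eq: "keymap d G m a = map2 ff (take m a) (drop m a) @ map2 gg (take m a) (drop m a)"
  by (simp add: keymap_def Let_def ff_def[abs_def] gg_def[abs_def] NN_def)

definition "keyinv m a = map2 hf (take m a) (drop m a) @ map2 kf (take m a) (drop m a)"

lemma map2_inv:
  assumes "length i = length j" "set i \<subseteq> {..<d}" "set j \<subseteq> {..<d}"
  shows "map2 hf (map2 ff i j) (map2 gg i j) = i" "map2 kf (map2 ff i j) (map2 gg i j) = j"
        "map2 ff (map2 hf i j) (map2 kf i j) = i" "map2 gg (map2 hf i j) (map2 kf i j) = j"
  using assms by (induction i j rule: list_induct2) (auto simp: pw)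

lemma map2_basis:
  assumes "i \<in> basis d m" "j \<in> basis d m"
  shows "map2 ff i j \<in> basis d m" "map2 gg i j \<in> basis d m"
        "map2 hf i j \<in> basis d m" "map2 kf i j \<in> basis d m"
  using assms by (auto simp: basis_def lt_d dest!: set_zip_leftD)

lemma split2: "a \<in> basis d (2*m) \<Longrightarrow> take m a \<in> basis d m \<and> drop m a \<in> basis d m"
  using take_in_basis[of a d m m] drop_in_basis[of a d m m] by (simp add: mult_2)

lemma keymap_basis: "a \<in> basis d (2*m) \<Longrightarrow> keymap d G m a \<in> basis d (2*m)"
  unfolding keymap_eq mult_2 using split2 append_in_basis map2_basis by (metis mult_2)

lemma keyinv_basis: "a \<in> basis d (2*m) \<Longrightarrow> keyinv m a \<in> basis d (2*m)"
  unfolding keyinv_def mult_2 using split2 append_in_basis map2_basis by (metis mult_2)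

lemma keyinv_keymap: "a \<in> basis d (2*m) \<Longrightarrow> keyinv m (keymap d G m a) = a"
proof -
  assume a: "a \<in> basis d (2*m)"
  let ?i = "take m a" and ?j = "drop m a"
  have i: "?i \<in> basis d m" and j: "?j \<in> basis d m" using split2[OF a] by auto
  have li: "length (map2 ff ?i ?j) = m" using i j by (auto simp: basis_def)
  have s: "set ?i \<subseteq> {..<d}" "set ?j \<subseteq> {..<d}" "length ?i = length ?j" using i j by (auto simp: basis_def)
  show ?thesis unfolding keymap_eq keyinv_def using li map2_inv[OF s(3) s(1) s(2)] by simp
qed

lemma keymap_keyinv: "a \<in> basis d (2*m) \<Longrightarrow> keymap d G m (keyinv m a) = a"
proof -
  assume a: "a \<in> basis d (2*m)"
  let ?i = "take m a" and ?j = "drop m a"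
  have i: "?i \<in> basis d m" and j: "?j \<in> basis d m" using split2[OF a] by auto
  have li: "length (map2 hf ?i ?j) = m" using i j by (auto simp: basis_def)
  have s: "set ?i \<subseteq> {..<d}" "set ?j \<subseteq> {..<d}" "length ?i = length ?j" using i j by (auto simp: basis_def)
  show ?thesis unfolding keymap_eq keyinv_def using li map2_inv[OF s(3) s(1) s(2)] by simp
qed

lemma keymap_iff: "p \<in> basis d (2*m) \<Longrightarrow> a \<in> basis d (2*m) \<Longrightarrow> (p = keymap d G m a) = (a = keyinv m p)"
  using keyinv_keymap keymap_keyinv by metis

lemma keyinv_app: "length z = m \<Longrightarrow> length t = m \<Longrightarrow> keyinv m (z @ t) = map2 hf z t @ map2 kf z t"
  by (simp add: keyinv_def)

lemma keyinv_app2: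
  assumes "length i1 = n" "length i2 = n" "length j1 = n" "length j2 = n"
  shows "keyinv (2*n) ((i1 @ i2) @ (j1 @ j2)) = (map2 hf i1 j1 @ map2 hf i2 j2) @ (map2 kf i1 j1 @ map2 kf i2 j2)"
  using assms by (simp add: keyinv_def mult_2 zip_append)

lemma U_mult: "p \<in> basis d (2*m) \<Longrightarrow> mmul d (2*m) (Ukey d G m) Y p b = Y (keyinv m p) b"
proof -
  assume p: "p \<in> basis d (2*m)"
  have "mmul d (2*m) (Ukey d G m) Y p b = (\<Sum>z\<in>basis d (2*m). if z = keyinv m p then Y z b else 0)"
    unfolding mmul_def Ukey_def by (rule sum.cong) (auto simp: keymap_iff[OF p])
  also have "\<dots> = Y (keyinv m p) b" using keyinv_basis[OF p] by simp
  finally show ?thesis .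
qed

lemma mult_Uadj: "q \<in> basis d (2*m) \<Longrightarrow> mmul d (2*m) Y (adj (Ukey d G m)) a q = Y a (keyinv m q)"
proof -
  assume q: "q \<in> basis d (2*m)"
  have "mmul d (2*m) Y (adj (Ukey d G m)) a q = (\<Sum>z\<in>basis d (2*m). if z = keyinv m q then Y a z else 0)"
    unfolding mmul_def Ukey_def adj_def by (rule sum.cong) (auto simp: keymap_iff[OF q])
  also have "\<dots> = Y a (keyinv m q)" using keyinv_basis[OF q] by simp
  finally show ?thesis .
qed

lemma conjU: "p \<in> basis d (2*m) \<Longrightarrow> q \<in> basis d (2*m) \<Longrightarrow>
   mmul d (2*m) (mmul d (2*m) (Ukey d G m) Y) (adj (Ukey d G m)) p q = Y (keyinv m p) (keyinv m q)"
  by (simp add: mult_Uadj U_mult)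

lemma conjU_zero: "p \<notin> basis d (2*m) \<Longrightarrow>
   mmul d (2*m) (mmul d (2*m) (Ukey d G m) Y) (adj (Ukey d G m)) p q = 0"
  by (auto simp: mmul_def Ukey_def keymap_basis intro!: sum.neutral)

lemma app_basis_m: "z \<in> basis d m \<Longrightarrow> (x @ z \<in> basis d (2*m)) = (x \<in> basis d m)"
  by (auto simp: basis_def)

lemma Emap_formula: "x \<in> basis d m \<Longrightarrow> y \<in> basis d m \<Longrightarrow>
   Emap d G m Y x y = (\<Sum>z\<in>basis d m. Y (keyinv m (x @ z)) (keyinv m (y @ z)))"
  unfolding Emap_def ptrace_B_def by (rule sum.cong) (auto simp: conjU app_basis_m)

lemma Emap_zero: "x \<notin> basis d m \<or> y \<notin> basis d m \<Longrightarrow> Emap d G m Y x y = 0"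
  unfolding Emap_def ptrace_B_def
proof (rule sum.neutral, rule ballI)
  fix z assume z: "z \<in> basis d m" and xy: "x \<notin> basis d m \<or> y \<notin> basis d m"
  from xy show "mmul d (2*m) (mmul d (2*m) (Ukey d G m) Y) (adj (Ukey d G m)) (x @ z) (y @ z) = 0"
  proof
    assume "x \<notin> basis d m" then show ?thesis using conjU_zero app_basis_m[OF z] by simp
  next
    assume "y \<notin> basis d m" then have "y @ z \<notin> basis d (2*m)" using app_basis_m[OF z] by simp
    then show ?thesis
      by (intro mmul_zero_col) (use keymap_basis in \<open>auto simp: adj_def Ukey_def\<close>)
  qed
qed

lemma Einv_formula: "a \<in> basis d (2*m) \<Longrightarrow> b \<in> basis d (2*m) \<Longrightarrow>
   Einv d G m \<rho> a b = tens m \<rho> (ident d m) (keymap d G m a) (keymap d G m b) / of_nat (d ^ m)"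
proof -
  assume a: "a \<in> basis d (2*m)" and b: "b \<in> basis d (2*m)"
  let ?T = "\<lambda>x y. tens m \<rho> (ident d m) x y / of_nat (d ^ m)"
  have 1: "mmul d (2*m) (adj (Ukey d G m)) ?T a c = ?T (keymap d G m a) c" for c
  proof -
    have "mmul d (2*m) (adj (Ukey d G m)) ?T a c = (\<Sum>z\<in>basis d (2*m). if z = keymap d G m a then ?T z c else 0)"
      unfolding mmul_def Ukey_def adj_def by (rule sum.cong) (use a in auto)
    also have "\<dots> = ?T (keymap d G m a) c" using keymap_basis[OF a] by simp
    finally show ?thesis .
  qed
  have "Einv d G m \<rho> a b = (\<Sum>z\<in>basis d (2*m). mmul d (2*m) (adj (Ukey d G m)) ?T a z * Ukey d G m z b)"
    by (simp add: Einv_def mmul_def[of d "2*m" _ "Ukey d G m"])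
  also have "\<dots> = (\<Sum>z\<in>basis d (2*m). ?T (keymap d G m a) z * Ukey d G m z b)"
    by (simp only: 1)
  also have "\<dots> = (\<Sum>z\<in>basis d (2*m). if z = keymap d G m b then ?T (keymap d G m a) z else 0)"
    by (rule sum.cong) (use b in \<open>auto simp: Ukey_def\<close>)
  also have "\<dots> = ?T (keymap d G m a) (keymap d G m b)" using keymap_basis[OF b] by simp
  finally show ?thesis .
qed


lemma sum_keyinv: "(\<Sum>a\<in>basis d (2*m). f a) = (\<Sum>a\<in>basis d (2*m). f (keyinv m a))"
proof -
  have "bij_betw (keyinv m) (basis d (2*m)) (basis d (2*m))"
    by (rule bij_betw_byWitness[where f'="keymap d G m"])
       (use keyinv_basis keymap_basis keymap_keyinv keyinv_keymap in auto)
  from sum.reindex_bij_betw[OF this, of f] show ?thesis by simp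
qed

end

lemma len_b: "x \<in> basis d m \<Longrightarrow> length x = m" by (simp add: basis_def)

lemma tens_app: "length A1 = m \<Longrightarrow> length B1 = m \<Longrightarrow> tens m X Y (A1 @ A2) (B1 @ B2) = X A1 B1 * Y A2 B2"
  by (simp add: tens_def)

lemma choi_app: assumes ch: "is_channel d n L" and "p \<in> basis d n" "q \<in> basis d n" "p' \<in> basis d n" "q' \<in> basis d n"
  shows "choi d n L (p @ p') (q @ q') = L (munit d n p q) p' q' / of_nat (d ^ n)"
proof -
  have "p @ p' \<in> basis d (2*n)" "q @ q' \<in> basis d (2*n)"
    using assms append_in_basis[of _ d n _ n] by (auto simp: mult_2)
  moreover have "length p = n" "length q = n" using assms by (auto simp: basis_def)
  ultimately show ?thesis using choi_formula[OF ch] by simp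
qed

locale cset = keysetup d G for d G +
  fixes n :: nat and L1 L2 :: "qop \<Rightarrow> qop"
  assumes ch1: "is_channel d n L1" and ch2: "is_channel d n L2"
begin

definition FF :: "qop \<Rightarrow> qop" where
  "FF \<rho> x y = (1 / of_nat (d ^ n)) * (\<Sum>z\<in>basis d n. \<Sum>w\<in>basis d n. \<Sum>t\<in>basis d n. \<Sum>u\<in>basis d n.
     \<rho> z w * (L1 (munit d n (map2 hf z t) (map2 hf w t)) (map2 hf x u) (map2 hf y u) *
               L2 (munit d n (map2 kf z t) (map2 kf w t)) (map2 kf x u) (map2 kf y u)))"

lemma mb: assumes "i \<in> basis d n" "j \<in> basis d n" shows "map2 hf i j \<in> basis d n \<and> map2 kf i j \<in> basis d n"
  using map2_basis(3)[OF assms] map2_basis(4)[OF assms] by simp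

lemma mb2: "a \<in> basis d n \<Longrightarrow> b \<in> basis d n \<Longrightarrow> a @ b \<in> basis d (2*n)"
  using append_in_basis[of a d n b n] by (simp add: mult_2)

lemma J_formula:
  assumes z: "z \<in> basis d n" and x: "x \<in> basis d n" and w: "w \<in> basis d n" and y: "y \<in> basis d n"
  shows "qconv d G (2*n) (choi d n L1) (choi d n L2) (z @ x) (w @ y) =
    (\<Sum>t\<in>basis d n. \<Sum>u\<in>basis d n.
       (L1 (munit d n (map2 hf z t) (map2 hf w t)) (map2 hf x u) (map2 hf y u) / of_nat (d ^ n)) *
       (L2 (munit d n (map2 kf z t) (map2 kf w t)) (map2 kf x u) (map2 kf y u) / of_nat (d ^ n)))"
proof -
  have zx: "z @ x \<in> basis d (2*n)" and wy: "w @ y \<in> basis d (2*n)" using mb2[OF z x] mb2[OF w y] by auto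
  have "qconv d G (2*n) (choi d n L1) (choi d n L2) (z @ x) (w @ y) =
     (\<Sum>u\<in>basis d (2*n). tens (2*n) (choi d n L1) (choi d n L2) (keyinv (2*n) ((z @ x) @ u)) (keyinv (2*n) ((w @ y) @ u)))"
    unfolding qconv_def by (rule Emap_formula[OF zx wy])
  also have "\<dots> = (\<Sum>t\<in>basis d n. \<Sum>u\<in>basis d n.
      tens (2*n) (choi d n L1) (choi d n L2) (keyinv (2*n) ((z @ x) @ (t @ u))) (keyinv (2*n) ((w @ y) @ (t @ u))))"
    by (rule sum_basis_double)
  also have "\<dots> = (\<Sum>t\<in>basis d n. \<Sum>u\<in>basis d n.
       (L1 (munit d n (map2 hf z t) (map2 hf w t)) (map2 hf x u) (map2 hf y u) / of_nat (d ^ n)) *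
       (L2 (munit d n (map2 kf z t) (map2 kf w t)) (map2 kf x u) (map2 kf y u) / of_nat (d ^ n)))"
  proof (intro sum.cong refl)
    fix t u assume t: "t \<in> basis d n" and u: "u \<in> basis d n"
    have ls: "length z = n" "length x = n" "length w = n" "length y = n" "length t = n" "length u = n"
      using len_b[OF z] len_b[OF x] len_b[OF w] len_b[OF y] len_b[OF t] len_b[OF u] by auto
    have k1: "keyinv (2*n) ((z @ x) @ (t @ u)) = (map2 hf z t @ map2 hf x u) @ (map2 kf z t @ map2 kf x u)"
      using keyinv_app2[OF ls(1) ls(2) ls(5) ls(6)] .
    have k2: "keyinv (2*n) ((w @ y) @ (t @ u)) = (map2 hf w t @ map2 hf y u) @ (map2 kf w t @ map2 kf y u)"
      using keyinv_app2[OF ls(3) ls(4) ls(5) ls(6)] .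
    have b1: "map2 hf z t @ map2 hf x u \<in> basis d (2*n)" "map2 hf w t @ map2 hf y u \<in> basis d (2*n)"
      "map2 kf z t @ map2 kf x u \<in> basis d (2*n)" "map2 kf w t @ map2 kf y u \<in> basis d (2*n)"
      using mb2 mb[OF z t] mb[OF w t] mb[OF x u] mb[OF y u] by auto
    have l2: "length (map2 hf z t @ map2 hf x u) = 2*n" "length (map2 hf w t @ map2 hf y u) = 2*n"
      using ls by auto
    have lh: "length (map2 hf z t) = n" "length (map2 hf w t) = n" "length (map2 kf z t) = n" "length (map2 kf w t) = n"
      using ls by auto
    show "tens (2*n) (choi d n L1) (choi d n L2) (keyinv (2*n) ((z @ x) @ (t @ u))) (keyinv (2*n) ((w @ y) @ (t @ u))) =
       (L1 (munit d n (map2 hf z t) (map2 hf w t)) (map2 hf x u) (map2 hf y u) / of_nat (d ^ n)) *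
       (L2 (munit d n (map2 kf z t) (map2 kf w t)) (map2 kf x u) (map2 kf y u) / of_nat (d ^ n))"
    proof -
      have m1: "map2 hf z t \<in> basis d n" "map2 hf w t \<in> basis d n" "map2 hf x u \<in> basis d n" "map2 hf y u \<in> basis d n"
        "map2 kf z t \<in> basis d n" "map2 kf w t \<in> basis d n" "map2 kf x u \<in> basis d n" "map2 kf y u \<in> basis d n"
        using mb[OF z t] mb[OF w t] mb[OF x u] mb[OF y u] by auto
      show ?thesis unfolding k1 k2 tens_app[OF l2]
        by (simp only: choi_app[OF ch1 m1(1) m1(2) m1(3) m1(4)] choi_app[OF ch2 m1(5) m1(6) m1(7) m1(8)])
    qed
  qed
  finally show ?thesis .
qed

end

lemma sum_perm4: "(\<Sum>u\<in>A. \<Sum>z\<in>B. \<Sum>t\<in>C. \<Sum>w\<in>D. f u z t w) = (\<Sum>z\<in>B. \<Sum>w\<in>D. \<Sum>t\<in>C. \<Sum>u\<in>A. f u z t w)"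
proof -
  have "(\<Sum>u\<in>A. \<Sum>z\<in>B. \<Sum>t\<in>C. \<Sum>w\<in>D. f u z t w) = (\<Sum>z\<in>B. \<Sum>u\<in>A. \<Sum>t\<in>C. \<Sum>w\<in>D. f u z t w)"
    by (rule sum.swap)
  also have "\<dots> = (\<Sum>z\<in>B. \<Sum>u\<in>A. \<Sum>w\<in>D. \<Sum>t\<in>C. f u z t w)"
    by (intro sum.cong refl sum.swap)
  also have "\<dots> = (\<Sum>z\<in>B. \<Sum>w\<in>D. \<Sum>u\<in>A. \<Sum>t\<in>C. f u z t w)"
    by (intro sum.cong refl sum.swap)
  also have "\<dots> = (\<Sum>z\<in>B. \<Sum>w\<in>D. \<Sum>t\<in>C. \<Sum>u\<in>A. f u z t w)"
    by (intro sum.cong refl sum.swap)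
  finally show ?thesis .
qed

context cset
begin

lemma Dnz: "(of_nat (d ^ n) :: complex) \<noteq> 0" using d_gt1 by simp

lemma LHS:
  assumes x: "x \<in> basis d n" and y: "y \<in> basis d n"
  shows "chan_conv d G n L1 L2 \<rho> x y = FF \<rho> x y"
proof -
  let ?J = "qconv d G (2*n) (choi d n L1) (choi d n L2)"
  let ?D = "of_nat (d ^ n) :: complex"
  have ly: "length y = n" using len_b[OF y] .
  have "chan_conv d G n L1 L2 \<rho> x y = ?D * (\<Sum>z\<in>basis d n. \<Sum>w\<in>basis d (2*n).
       ?J (z @ x) w * tens n (transp \<rho>) (ident d n) w (z @ y))"
    by (simp add: chan_conv_def chan_of_choi_def ptrace_A_def mmul_def)
  also have "\<dots> = ?D * (\<Sum>z\<in>basis d n. \<Sum>w\<in>basis d n. ?J (z @ x) (w @ y) * \<rho> z w)"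
  proof -
    have "(\<Sum>w\<in>basis d (2*n). ?J (z @ x) w * tens n (transp \<rho>) (ident d n) w (z @ y))
        = (\<Sum>w\<in>basis d n. ?J (z @ x) (w @ y) * \<rho> z w)" if z: "z \<in> basis d n" for z
    proof -
      have lz: "length z = n" using len_b[OF z] .
      have "(\<Sum>w\<in>basis d (2*n). ?J (z @ x) w * tens n (transp \<rho>) (ident d n) w (z @ y))
        = (\<Sum>w\<in>basis d n. \<Sum>w2\<in>basis d n. ?J (z @ x) (w @ w2) * tens n (transp \<rho>) (ident d n) (w @ w2) (z @ y))"
        by (rule sum_basis_double)
      also have "\<dots> = (\<Sum>w\<in>basis d n. \<Sum>w2\<in>basis d n. if w2 = y then ?J (z @ x) (w @ y) * \<rho> z w else 0)"
      proof (intro sum.cong refl)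
        fix w w2 assume w: "w \<in> basis d n" and w2: "w2 \<in> basis d n"
        show "?J (z @ x) (w @ w2) * tens n (transp \<rho>) (ident d n) (w @ w2) (z @ y) =
          (if w2 = y then ?J (z @ x) (w @ y) * \<rho> z w else 0)"
          using tens_app[of w n z] len_b[OF w] lz w2 by (simp add: transp_def ident_def)
      qed
      also have "\<dots> = (\<Sum>w\<in>basis d n. ?J (z @ x) (w @ y) * \<rho> z w)"
        using y by simp
      finally show ?thesis .
    qed
    then show ?thesis by simp
  qed
  also have "\<dots> = FF \<rho> x y"
  proof -
    have "?D * (\<Sum>z\<in>basis d n. \<Sum>w\<in>basis d n. ?J (z @ x) (w @ y) * \<rho> z w) =
      (\<Sum>z\<in>basis d n. \<Sum>w\<in>basis d n. \<Sum>t\<in>basis d n. \<Sum>u\<in>basis d n. ?D *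
       ((L1 (munit d n (map2 hf z t) (map2 hf w t)) (map2 hf x u) (map2 hf y u) / ?D) *
       (L2 (munit d n (map2 kf z t) (map2 kf w t)) (map2 kf x u) (map2 kf y u) / ?D) * \<rho> z w))"
      by (simp add: J_formula x y sum_distrib_left sum_distrib_right)
    also have "\<dots> = (\<Sum>z\<in>basis d n. \<Sum>w\<in>basis d n. \<Sum>t\<in>basis d n. \<Sum>u\<in>basis d n. (1 / ?D) *
       (\<rho> z w * (L1 (munit d n (map2 hf z t) (map2 hf w t)) (map2 hf x u) (map2 hf y u) *
       L2 (munit d n (map2 kf z t) (map2 kf w t)) (map2 kf x u) (map2 kf y u))))"
      using Dnz d_gt1 by (intro sum.cong refl) (simp add: field_simps)
    also have "\<dots> = FF \<rho> x y" by (simp add: FF_def sum_distrib_left)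
    finally show ?thesis .
  qed
  finally show ?thesis .
qed


lemma W_formula:
  assumes x: "x \<in> basis d n" and y: "y \<in> basis d n" and u: "u \<in> basis d n"
  shows "chan_tensor d n L1 L2 (Einv d G n \<rho>) (keyinv n (x @ u)) (keyinv n (y @ u)) =
    (\<Sum>s\<in>basis d n. \<Sum>t\<in>basis d n. \<Sum>s'\<in>basis d n. (1 / of_nat (d ^ n)) *
       (\<rho> s s' * (L1 (munit d n (map2 hf s t) (map2 hf s' t)) (map2 hf x u) (map2 hf y u) *
       L2 (munit d n (map2 kf s t) (map2 kf s' t)) (map2 kf x u) (map2 kf y u))))"
proof -
  let ?D = "of_nat (d ^ n) :: complex"
  let ?F = "\<lambda>a b. tens n \<rho> (ident d n) (keymap d G n a) (keymap d G n b) / ?D *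
     (L1 (munit d n (take n a) (take n b)) (map2 hf x u) (map2 hf y u) *
      L2 (munit d n (drop n a) (drop n b)) (map2 kf x u) (map2 kf y u))"
  have lx: "length x = n" "length y = n" "length u = n" using len_b x y u by auto
  have ki: "keyinv n (x @ u) = map2 hf x u @ map2 kf x u" "keyinv n (y @ u) = map2 hf y u @ map2 kf y u"
    using keyinv_app lx by auto
  have lh: "length (map2 hf x u) = n" "length (map2 hf y u) = n" using lx by auto
  have "chan_tensor d n L1 L2 (Einv d G n \<rho>) (keyinv n (x @ u)) (keyinv n (y @ u)) =
     (\<Sum>a\<in>basis d (2*n). \<Sum>b\<in>basis d (2*n). ?F a b)"
    unfolding chan_tensor_def ki tens_app[OF lh]
    by (intro sum.cong refl) (simp add: Einv_formula)
  also have "\<dots> = (\<Sum>a\<in>basis d (2*n). \<Sum>b\<in>basis d (2*n). ?F (keyinv n a) (keyinv n b))"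
  proof -
    have "(\<Sum>a\<in>basis d (2*n). \<Sum>b\<in>basis d (2*n). ?F a b) =
      (\<Sum>a\<in>basis d (2*n). \<Sum>b\<in>basis d (2*n). ?F (keyinv n a) b)"
      by (rule sum_keyinv)
    also have "\<dots> = (\<Sum>a\<in>basis d (2*n). \<Sum>b\<in>basis d (2*n). ?F (keyinv n a) (keyinv n b))"
      by (intro sum.cong refl sum_keyinv)
    finally show ?thesis .
  qed
  also have "\<dots> = (\<Sum>a\<in>basis d (2*n). \<Sum>b\<in>basis d (2*n). tens n \<rho> (ident d n) a b / ?D *
     (L1 (munit d n (take n (keyinv n a)) (take n (keyinv n b))) (map2 hf x u) (map2 hf y u) *
      L2 (munit d n (drop n (keyinv n a)) (drop n (keyinv n b))) (map2 kf x u) (map2 kf y u)))"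
    by (intro sum.cong refl) (simp add: keymap_keyinv)
  also have "\<dots> = (\<Sum>s\<in>basis d n. \<Sum>t\<in>basis d n. \<Sum>s'\<in>basis d n. \<Sum>t'\<in>basis d n.
     tens n \<rho> (ident d n) (s @ t) (s' @ t') / ?D *
     (L1 (munit d n (take n (keyinv n (s @ t))) (take n (keyinv n (s' @ t')))) (map2 hf x u) (map2 hf y u) *
      L2 (munit d n (drop n (keyinv n (s @ t))) (drop n (keyinv n (s' @ t')))) (map2 kf x u) (map2 kf y u)))"
    unfolding sum_basis_double by (rule refl)
  also have "\<dots> = (\<Sum>s\<in>basis d n. \<Sum>t\<in>basis d n. \<Sum>s'\<in>basis d n. \<Sum>t'\<in>basis d n.
     if t' = t then (1 / ?D) *
       (\<rho> s s' * (L1 (munit d n (map2 hf s t) (map2 hf s' t)) (map2 hf x u) (map2 hf y u) *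
       L2 (munit d n (map2 kf s t) (map2 kf s' t)) (map2 kf x u) (map2 kf y u))) else 0)"
  proof (intro sum.cong refl)
    fix s t s' t' assume s: "s \<in> basis d n" and t: "t \<in> basis d n" and s': "s' \<in> basis d n" and t': "t' \<in> basis d n"
    have ls: "length s = n" "length t = n" "length s' = n" "length t' = n" using len_b s t s' t' by auto
    have k: "keyinv n (s @ t) = map2 hf s t @ map2 kf s t" "keyinv n (s' @ t') = map2 hf s' t' @ map2 kf s' t'"
      using keyinv_app ls by auto
    show "tens n \<rho> (ident d n) (s @ t) (s' @ t') / ?D *
     (L1 (munit d n (take n (keyinv n (s @ t))) (take n (keyinv n (s' @ t')))) (map2 hf x u) (map2 hf y u) *
      L2 (munit d n (drop n (keyinv n (s @ t))) (drop n (keyinv n (s' @ t')))) (map2 kf x u) (map2 kf y u)) =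
     (if t' = t then (1 / ?D) *
       (\<rho> s s' * (L1 (munit d n (map2 hf s t) (map2 hf s' t)) (map2 hf x u) (map2 hf y u) *
       L2 (munit d n (map2 kf s t) (map2 kf s' t)) (map2 kf x u) (map2 kf y u))) else 0)"
      unfolding k tens_app[OF ls(1) ls(3)] using ls t by (cases "t' = t") (simp_all add: ident_def)
  qed
  also have "\<dots> = (\<Sum>s\<in>basis d n. \<Sum>t\<in>basis d n. \<Sum>s'\<in>basis d n. (1 / ?D) *
       (\<rho> s s' * (L1 (munit d n (map2 hf s t) (map2 hf s' t)) (map2 hf x u) (map2 hf y u) *
       L2 (munit d n (map2 kf s t) (map2 kf s' t)) (map2 kf x u) (map2 kf y u))))"
    by (intro sum.cong refl) (simp add: sum.delta)
  finally show ?thesis .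
qed

lemma RHS:
  assumes x: "x \<in> basis d n" and y: "y \<in> basis d n"
  shows "Emap d G n (chan_tensor d n L1 L2 (Einv d G n \<rho>)) x y = FF \<rho> x y"
proof -
  have "Emap d G n (chan_tensor d n L1 L2 (Einv d G n \<rho>)) x y =
    (\<Sum>u\<in>basis d n. \<Sum>s\<in>basis d n. \<Sum>t\<in>basis d n. \<Sum>s'\<in>basis d n. (1 / of_nat (d ^ n)) *
       (\<rho> s s' * (L1 (munit d n (map2 hf s t) (map2 hf s' t)) (map2 hf x u) (map2 hf y u) *
       L2 (munit d n (map2 kf s t) (map2 kf s' t)) (map2 kf x u) (map2 kf y u))))"
    unfolding Emap_formula[OF x y] by (intro sum.cong refl) (simp add: W_formula x y)
  also have "\<dots> = FF \<rho> x y" by (subst sum_perm4) (simp add: FF_def sum_distrib_left)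
  finally show ?thesis .
qed

end

lemma card_basis: "card (basis d m) = d ^ m"
proof -
  have "basis d m = {xs. set xs \<subseteq> {..<d} \<and> length xs = m}" by (auto simp: basis_def)
  then show ?thesis using card_lists_length_eq[of "{..<d}" m] by simp
qed

lemma sum_move3: "(\<Sum>x\<in>X. \<Sum>z\<in>Z. \<Sum>w\<in>W. \<Sum>t\<in>T. f x z w t) = (\<Sum>z\<in>Z. \<Sum>w\<in>W. \<Sum>t\<in>T. \<Sum>x\<in>X. f x z w t)"
proof -
  have "(\<Sum>x\<in>X. \<Sum>z\<in>Z. \<Sum>w\<in>W. \<Sum>t\<in>T. f x z w t) = (\<Sum>z\<in>Z. \<Sum>x\<in>X. \<Sum>w\<in>W. \<Sum>t\<in>T. f x z w t)"
    by (rule sum.swap)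
  also have "\<dots> = (\<Sum>z\<in>Z. \<Sum>w\<in>W. \<Sum>x\<in>X. \<Sum>t\<in>T. f x z w t)"
    by (intro sum.cong refl sum.swap)
  also have "\<dots> = (\<Sum>z\<in>Z. \<Sum>w\<in>W. \<Sum>t\<in>T. \<Sum>x\<in>X. f x z w t)"
    by (intro sum.cong refl sum.swap)
  finally show ?thesis .
qed

lemma chan_of_choi_lin:
  "chan_of_choi d n J (\<lambda>x y. c * A x y + B x y) = (\<lambda>x y. c * chan_of_choi d n J A x y + chan_of_choi d n J B x y)"
  by (intro ext) (simp add: chan_of_choi_def ptrace_A_def mmul_def tens_def transp_def sum.distrib
      sum_distrib_left algebra_simps)

context cset
begin

lemma chan_conv_zero:
  assumes "x \<notin> basis d n \<or> y \<notin> basis d n"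
  shows "chan_conv d G n L1 L2 \<rho> x y = 0"
  unfolding chan_conv_def chan_of_choi_def ptrace_A_def mmul_def
proof -
  have "(\<Sum>z\<in>basis d n. \<Sum>w\<in>basis d (2*n). qconv d G (2*n) (choi d n L1) (choi d n L2) (z @ x) w *
          tens n (transp \<rho>) (ident d n) w (z @ y)) = 0"
  proof (intro sum.neutral ballI)
    fix z w assume z: "z \<in> basis d n" and w: "w \<in> basis d (2*n)"
    have lz: "length z = n" using len_b[OF z] .
    show "qconv d G (2*n) (choi d n L1) (choi d n L2) (z @ x) w * tens n (transp \<rho>) (ident d n) w (z @ y) = 0"
      using assms
    proof
      assume "x \<notin> basis d n"
      then have "z @ x \<notin> basis d (2*(2*n)) \<or> True" by simp
      have "z @ x \<notin> basis d (2*n)" using pre_basis[OF z] \<open>x \<notin> basis d n\<close> by simp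
      then show ?thesis unfolding qconv_def using Emap_zero by simp
    next
      assume "y \<notin> basis d n"
      then show ?thesis using lz by (auto simp: tens_def ident_def)
    qed
  qed
  then show "of_nat (d ^ n) * (\<Sum>z\<in>basis d n. \<Sum>w\<in>basis d (2*n). qconv d G (2*n) (choi d n L1) (choi d n L2) (z @ x) w *
          tens n (transp \<rho>) (ident d n) w (z @ y)) = 0" by simp
qed

lemma sum_hk: "(\<Sum>x\<in>basis d n. \<Sum>u\<in>basis d n. f (map2 hf x u) (map2 kf x u)) = (\<Sum>p\<in>basis d n. \<Sum>q\<in>basis d n. f p q)"
proof -
  let ?g = "\<lambda>a. f (take n a) (drop n a)"
  have "(\<Sum>x\<in>basis d n. \<Sum>u\<in>basis d n. f (map2 hf x u) (map2 kf x u)) =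
        (\<Sum>x\<in>basis d n. \<Sum>u\<in>basis d n. ?g (keyinv n (x @ u)))"
  proof (intro sum.cong refl)
    fix x u assume x: "x \<in> basis d n" and u: "u \<in> basis d n"
    have l: "length x = n" "length u = n" using len_b x u by auto
    then show "f (map2 hf x u) (map2 kf x u) = ?g (keyinv n (x @ u))" by (simp add: keyinv_app)
  qed
  also have "\<dots> = (\<Sum>a\<in>basis d (2*n). ?g (keyinv n a))" by (rule sum_basis_double[symmetric])
  also have "\<dots> = (\<Sum>a\<in>basis d (2*n). ?g a)" by (rule sum_keyinv[symmetric])
  also have "\<dots> = (\<Sum>p\<in>basis d n. \<Sum>q\<in>basis d n. ?g (p @ q))" by (rule sum_basis_double)
  also have "\<dots> = (\<Sum>p\<in>basis d n. \<Sum>q\<in>basis d n. f p q)"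
    by (intro sum.cong refl) (simp add: len_b)
  finally show ?thesis .
qed

lemma trace_munit: "a \<in> basis d n \<Longrightarrow> b \<in> basis d n \<Longrightarrow> trace d n (munit d n a b) = (if a = b then 1 else 0)"
  by (cases "a = b") (auto simp: trace_def munit_def intro: sum.neutral)

lemma trace_K: assumes ch: "is_channel d n L" and a: "a \<in> basis d n" and b: "b \<in> basis d n"
  shows "(\<Sum>p\<in>basis d n. L (munit d n a b) p p) = (if a = b then 1 else 0)"
  using ch munit_is_op[of d n a b] trace_munit[OF a b] by (simp add: is_channel_def trace_def)

lemma keyinv_inj: assumes "z \<in> basis d n" "w \<in> basis d n" "t \<in> basis d n"
  shows "(map2 hf z t = map2 hf w t \<and> map2 kf z t = map2 kf w t) = (z = w)"
proof
  assume h: "map2 hf z t = map2 hf w t \<and> map2 kf z t = map2 kf w t"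
  have l: "length z = n" "length w = n" "length t = n" using len_b assms by auto
  have "keyinv n (z @ t) = keyinv n (w @ t)" using h l by (simp add: keyinv_app)
  then have "keymap d G n (keyinv n (z @ t)) = keymap d G n (keyinv n (w @ t))" by simp
  moreover have "z @ t \<in> basis d (2*n)" "w @ t \<in> basis d (2*n)" using mb2 assms by auto
  ultimately have "z @ t = w @ t" using keymap_keyinv by simp
  then show "z = w" by simp
qed simp

lemma trace_conv: "trace d n (chan_conv d G n L1 L2 \<rho>) = trace d n \<rho>"
proof -
  let ?D = "of_nat (d ^ n) :: complex"
  have "trace d n (chan_conv d G n L1 L2 \<rho>) = (\<Sum>x\<in>basis d n. FF \<rho> x x)"
    unfolding trace_def by (intro sum.cong refl) (simp add: LHS)
  also have "\<dots> = (1 / ?D) * (\<Sum>x\<in>basis d n. \<Sum>z\<in>basis d n. \<Sum>w\<in>basis d n. \<Sum>t\<in>basis d n. \<Sum>u\<in>basis d n.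
     \<rho> z w * (L1 (munit d n (map2 hf z t) (map2 hf w t)) (map2 hf x u) (map2 hf x u) *
               L2 (munit d n (map2 kf z t) (map2 kf w t)) (map2 kf x u) (map2 kf x u)))"
    by (simp add: FF_def sum_distrib_left)
  also have "\<dots> = (1 / ?D) * (\<Sum>z\<in>basis d n. \<Sum>w\<in>basis d n. \<Sum>t\<in>basis d n. \<Sum>x\<in>basis d n. \<Sum>u\<in>basis d n.
     \<rho> z w * (L1 (munit d n (map2 hf z t) (map2 hf w t)) (map2 hf x u) (map2 hf x u) *
               L2 (munit d n (map2 kf z t) (map2 kf w t)) (map2 kf x u) (map2 kf x u)))"
    by (subst sum_move3) (rule refl)
  also have "\<dots> = (1 / ?D) * (\<Sum>z\<in>basis d n. \<Sum>w\<in>basis d n. \<Sum>t\<in>basis d n. if z = w then \<rho> z w else 0)"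
  proof -
    have "(\<Sum>x\<in>basis d n. \<Sum>u\<in>basis d n.
     \<rho> z w * (L1 (munit d n (map2 hf z t) (map2 hf w t)) (map2 hf x u) (map2 hf x u) *
               L2 (munit d n (map2 kf z t) (map2 kf w t)) (map2 kf x u) (map2 kf x u))) = (if z = w then \<rho> z w else 0)"
      if z: "z \<in> basis d n" and w: "w \<in> basis d n" and t: "t \<in> basis d n" for z w t
    proof -
      have "(\<Sum>x\<in>basis d n. \<Sum>u\<in>basis d n.
     \<rho> z w * (L1 (munit d n (map2 hf z t) (map2 hf w t)) (map2 hf x u) (map2 hf x u) *
               L2 (munit d n (map2 kf z t) (map2 kf w t)) (map2 kf x u) (map2 kf x u))) =
        (\<Sum>p\<in>basis d n. \<Sum>q\<in>basis d n.
     \<rho> z w * (L1 (munit d n (map2 hf z t) (map2 hf w t)) p p *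
               L2 (munit d n (map2 kf z t) (map2 kf w t)) q q))"
        by (rule sum_hk)
      also have "\<dots> = \<rho> z w * ((\<Sum>p\<in>basis d n. L1 (munit d n (map2 hf z t) (map2 hf w t)) p p) *
           (\<Sum>q\<in>basis d n. L2 (munit d n (map2 kf z t) (map2 kf w t)) q q))"
        by (simp only: sum_distrib_left sum_distrib_right) (rule sum.swap)
      also have "\<dots> = (if z = w then \<rho> z w else 0)"
        using trace_K[OF ch1] trace_K[OF ch2] mb[OF z t] mb[OF w t] keyinv_inj[OF z w t] by auto
      finally show ?thesis .
    qed
    then show ?thesis by simp
  qed
  also have "\<dots> = (1 / ?D) * (\<Sum>z\<in>basis d n. \<Sum>w\<in>basis d n. if z = w then ?D * \<rho> z z else 0)"
    by (intro arg_cong[where f="\<lambda>x. (1 / ?D) * x"] sum.cong refl) (simp add: card_basis)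
  also have "\<dots> = (1 / ?D) * (\<Sum>z\<in>basis d n. ?D * \<rho> z z)"
    by (simp add: sum.delta)
  also have "\<dots> = trace d n \<rho>" using Dnz by (simp add: trace_def sum_distrib_left)
  finally show ?thesis .
qed

end

definition form :: "nat \<Rightarrow> nat \<Rightarrow> qop \<Rightarrow> (nat list \<Rightarrow> complex) \<Rightarrow> complex" where
  "form d m A v = (\<Sum>x\<in>basis d m. \<Sum>y\<in>basis d m. cnj (v x) * A x y * v y)"

definition cnn :: "complex \<Rightarrow> bool" where "cnn q \<longleftrightarrow> Im q = 0 \<and> Re q \<ge> 0"

lemma psd_iff: "psd d m A = (is_op d m A \<and> (\<forall>v. cnn (form d m A v)))"
  by (simp add: psd_def form_def cnn_def Let_def)

lemma cnn_sum: "(\<And>i. i \<in> S \<Longrightarrow> cnn (f i)) \<Longrightarrow> cnn (sum f S)"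
  by (auto simp: cnn_def Im_sum Re_sum intro: sum_nonneg)

lemma cnn_scale: "cnn q \<Longrightarrow> cnn ((1 / of_nat N) * q)"
  by (auto simp: cnn_def)

lemma sum_perm22: "(\<Sum>a\<in>A. \<Sum>b\<in>B. \<Sum>c\<in>C. \<Sum>d\<in>D. f a b c d) = (\<Sum>c\<in>C. \<Sum>d\<in>D. \<Sum>a\<in>A. \<Sum>b\<in>B. f a b c d)"
proof -
  have "(\<Sum>a\<in>A. \<Sum>b\<in>B. \<Sum>c\<in>C. \<Sum>d\<in>D. f a b c d) = (\<Sum>a\<in>A. \<Sum>c\<in>C. \<Sum>b\<in>B. \<Sum>d\<in>D. f a b c d)"
    by (intro sum.cong refl sum.swap)
  also have "\<dots> = (\<Sum>c\<in>C. \<Sum>a\<in>A. \<Sum>b\<in>B. \<Sum>d\<in>D. f a b c d)" by (rule sum.swap)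
  also have "\<dots> = (\<Sum>c\<in>C. \<Sum>a\<in>A. \<Sum>d\<in>D. \<Sum>b\<in>B. f a b c d)" by (intro sum.cong refl sum.swap)
  also have "\<dots> = (\<Sum>c\<in>C. \<Sum>d\<in>D. \<Sum>a\<in>A. \<Sum>b\<in>B. f a b c d)" by (intro sum.cong refl sum.swap)
  finally show ?thesis .
qed

lemma sdl: "finite S \<Longrightarrow> a \<in> S \<Longrightarrow> (\<Sum>q\<in>S. F q * (if a = q then e else 0)) = F a * (e::complex)"
proof -
  assume "finite S" "a \<in> S"
  have "(\<Sum>q\<in>S. F q * (if a = q then e else 0)) = (\<Sum>q\<in>S. if a = q then F q * e else 0)"
    by (rule sum.cong) simp_all
  then show ?thesis using \<open>finite S\<close> \<open>a \<in> S\<close> by simp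
qed

lemma sdr: "finite S \<Longrightarrow> a \<in> S \<Longrightarrow> (\<Sum>p\<in>S. (if a = p then c else 0) * F p) = (c::complex) * F a"
proof -
  assume "finite S" "a \<in> S"
  have "(\<Sum>p\<in>S. (if a = p then c else 0) * F p) = (\<Sum>p\<in>S. if a = p then c * F p else 0)"
    by (rule sum.cong) simp_all
  then show ?thesis using \<open>finite S\<close> \<open>a \<in> S\<close> by simp
qed

lemma prod3_sums: "(\<Sum>x\<in>X. f x) * c * (\<Sum>y\<in>Y. g y) = (\<Sum>x\<in>X. \<Sum>y\<in>Y. f x * c * (g y::complex))"
proof -
  have "(\<Sum>x\<in>X. f x) * c = (\<Sum>x\<in>X. f x * c)" by (rule sum_distrib_right)
  then have "(\<Sum>x\<in>X. f x) * c * (\<Sum>y\<in>Y. g y) = (\<Sum>x\<in>X. f x * c) * (\<Sum>y\<in>Y. g y)" by simp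
  also have "\<dots> = (\<Sum>x\<in>X. f x * c * (\<Sum>y\<in>Y. g y))" by (rule sum_distrib_right)
  also have "\<dots> = (\<Sum>x\<in>X. \<Sum>y\<in>Y. f x * c * g y)" by (intro sum.cong refl sum_distrib_left)
  finally show ?thesis .
qed

lemma cnj_if_sum: "cnj (\<Sum>x\<in>X. if P x then v x else 0) = (\<Sum>x\<in>X. if P x then cnj (v x) else 0)"
  unfolding cnj_sum by (rule sum.cong) auto

lemma pull_form:
  assumes psi: "\<And>x. x \<in> basis d m \<Longrightarrow> \<psi> x \<in> basis d m'"
  shows "(\<Sum>x\<in>basis d m. \<Sum>y\<in>basis d m. cnj (v x) * A (\<psi> x) (\<psi> y) * v y) =
         form d m' A (\<lambda>P. \<Sum>x\<in>basis d m. if \<psi> x = P then v x else 0)"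
proof -
  have "form d m' A (\<lambda>P. \<Sum>x\<in>basis d m. if \<psi> x = P then v x else 0) =
    (\<Sum>P\<in>basis d m'. \<Sum>Q\<in>basis d m'. \<Sum>x\<in>basis d m. \<Sum>y\<in>basis d m.
       (if \<psi> x = P then cnj (v x) else 0) * A P Q * (if \<psi> y = Q then v y else 0))"
    unfolding form_def cnj_if_sum prod3_sums by (rule refl)
  also have "\<dots> = (\<Sum>x\<in>basis d m. \<Sum>y\<in>basis d m. \<Sum>P\<in>basis d m'. \<Sum>Q\<in>basis d m'.
       (if \<psi> x = P then cnj (v x) else 0) * A P Q * (if \<psi> y = Q then v y else 0))"
    by (rule sum_perm22)
  also have "\<dots> = (\<Sum>x\<in>basis d m. \<Sum>y\<in>basis d m. cnj (v x) * A (\<psi> x) (\<psi> y) * v y)"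
  proof (intro sum.cong refl)
    fix x y assume x: "x \<in> basis d m" and y: "y \<in> basis d m"
    have "(\<Sum>P\<in>basis d m'. \<Sum>Q\<in>basis d m'.
       (if \<psi> x = P then cnj (v x) else 0) * A P Q * (if \<psi> y = Q then v y else 0)) =
       (\<Sum>P\<in>basis d m'. (if \<psi> x = P then cnj (v x) else 0) * A P (\<psi> y) * v y)"
      by (intro sum.cong refl sdl[OF finite_basis psi[OF y]])
    also have "\<dots> = (\<Sum>P\<in>basis d m'. (if \<psi> x = P then cnj (v x) else 0) * (A P (\<psi> y) * v y))"
      by (simp only: mult.assoc)
    also have "\<dots> = cnj (v x) * (A (\<psi> x) (\<psi> y) * v y)"
      by (rule sdr[OF finite_basis psi[OF x]])
    also have "\<dots> = cnj (v x) * A (\<psi> x) (\<psi> y) * v y" by (simp only: mult.assoc)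
    finally show "(\<Sum>P\<in>basis d m'. \<Sum>Q\<in>basis d m'.
       (if \<psi> x = P then cnj (v x) else 0) * A P Q * (if \<psi> y = Q then v y else 0)) = cnj (v x) * A (\<psi> x) (\<psi> y) * v y" .
  qed
  finally show ?thesis by simp
qed

lemma psd_pull_cnn:
  assumes "psd d m' A" "\<And>x. x \<in> basis d m \<Longrightarrow> \<psi> x \<in> basis d m'"
  shows "cnn (\<Sum>x\<in>basis d m. \<Sum>y\<in>basis d m. cnj (v x) * A (\<psi> x) (\<psi> y) * v y)"
proof -
  have "cnn (form d m' A (\<lambda>P. \<Sum>x\<in>basis d m. if \<psi> x = P then v x else 0))"
    using assms(1) psd_iff by blast
  then show ?thesis using pull_form[OF assms(2), where v=v and A=A] by simp
qed

lemma psd_pull: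
  assumes "psd d m' A" "\<And>x. x \<in> basis d m \<Longrightarrow> \<psi> x \<in> basis d m'"
  shows "psd d m (\<lambda>x y. if x \<in> basis d m \<and> y \<in> basis d m then A (\<psi> x) (\<psi> y) else 0)"
proof -
  have "form d m (\<lambda>x y. if x \<in> basis d m \<and> y \<in> basis d m then A (\<psi> x) (\<psi> y) else 0) v =
     (\<Sum>x\<in>basis d m. \<Sum>y\<in>basis d m. cnj (v x) * A (\<psi> x) (\<psi> y) * v y)" for v
    unfolding form_def by (intro sum.cong refl) simp
  moreover have "is_op d m (\<lambda>x y. if x \<in> basis d m \<and> y \<in> basis d m then A (\<psi> x) (\<psi> y) else 0)"
    by (simp add: is_op_def)
  ultimately show ?thesis using psd_pull_cnn[OF assms] by (simp add: psd_iff)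
qed

lemma idt_exp:
  assumes ch: "is_channel d n L" and Z: "is_op d (K + n) Z" and P: "P \<in> basis d K" and Q: "Q \<in> basis d K"
  shows "idtensor K L Z (P @ p) (Q @ q) = (\<Sum>a\<in>basis d n. \<Sum>b\<in>basis d n. Z (P @ a) (Q @ b) * L (munit d n a b) p q)"
proof -
  have lP: "length P = K" "length Q = K" using P Q by (auto simp: basis_def)
  have blk: "is_op d n (\<lambda>x' y'. Z (P @ x') (Q @ y'))"
    using Z append_basis_iff[OF lP(1), of _ d n] append_basis_iff[OF lP(2), of _ d n] by (auto simp: is_op_def)
  show ?thesis unfolding idtensor_def using lP ch_expand[OF ch blk] by simp
qed

lemma sum_basis_k2n: "(\<Sum>R\<in>basis d (k+n+n). f R) = (\<Sum>r\<in>basis d k. \<Sum>a\<in>basis d (2*n). f (r @ a))"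
  using sum_basis_add[where d=d and m=k and k="2*n" and f=f] by (simp add: mult_2 add.assoc)

lemma app_k2n: "r \<in> basis d k \<Longrightarrow> a \<in> basis d (2*n) \<Longrightarrow> r @ a \<in> basis d (k+n+n)"
  using append_in_basis[of r d k a "2*n"] by (simp add: mult_2 add.assoc)

lemma sum_fiber: assumes t: "t \<in> basis d n"
  shows "(\<Sum>a\<in>basis d (2*n). if drop n a = t then g a else 0) = (\<Sum>z\<in>basis d n. g (z @ t))"
proof -
  have "(\<Sum>a\<in>basis d (2*n). if drop n a = t then g a else 0) =
     (\<Sum>z\<in>basis d n. \<Sum>t'\<in>basis d n. if drop n (z @ t') = t then g (z @ t') else 0)"
    by (rule sum_basis_double)
  also have "\<dots> = (\<Sum>z\<in>basis d n. \<Sum>t'\<in>basis d n. if t' = t then g (z @ t') else 0)"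
    by (intro sum.cong refl) (simp add: basis_def)
  also have "\<dots> = (\<Sum>z\<in>basis d n. g (z @ t))" using t by (simp add: sum.delta)
  finally show ?thesis .
qed

context cset
begin

definition Z0 :: "nat \<Rightarrow> nat list \<Rightarrow> qop \<Rightarrow> qop" where
  "Z0 k t X R S = (if R \<in> basis d (k+n+n) \<and> S \<in> basis d (k+n+n) \<and>
      drop n (keymap d G n (drop k R)) = t \<and> drop n (keymap d G n (drop k S)) = t
    then X (take k R @ take n (keymap d G n (drop k R))) (take k S @ take n (keymap d G n (drop k S))) else 0)"

lemma Z0_app: assumes r: "r \<in> basis d k" and s: "s \<in> basis d k" and a: "a \<in> basis d (2*n)" and b: "b \<in> basis d (2*n)"
  shows "Z0 k t X (r @ keyinv n a) (s @ keyinv n b) =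
     (if drop n a = t then (if drop n b = t then X (r @ take n a) (s @ take n b) else 0) else 0)"
proof -
  have lr: "length r = k" "length s = k" using r s by (auto simp: basis_def)
  have "r @ keyinv n a \<in> basis d (k+n+n)" "s @ keyinv n b \<in> basis d (k+n+n)"
    using app_k2n r s keyinv_basis a b by auto
  then show ?thesis unfolding Z0_def using lr keymap_keyinv[OF a] keymap_keyinv[OF b] by simp
qed

lemma psd_Z0: assumes X: "psd d (k+n) X" and t: "t \<in> basis d n"
  shows "psd d (k+n+n) (Z0 k t X)"
proof -
  have op: "is_op d (k+n+n) (Z0 k t X)" by (simp add: is_op_def Z0_def)
  have "form d (k+n+n) (Z0 k t X) W = form d (k+n) X (\<lambda>x. W (take k x @ keyinv n (drop k x @ t)))" for W
  proof -
    have "form d (k+n+n) (Z0 k t X) W =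
      (\<Sum>r\<in>basis d k. \<Sum>a\<in>basis d (2*n). \<Sum>s\<in>basis d k. \<Sum>b\<in>basis d (2*n).
         cnj (W (r @ a)) * Z0 k t X (r @ a) (s @ b) * W (s @ b))"
      unfolding form_def sum_basis_k2n by (rule refl)
    also have "\<dots> = (\<Sum>r\<in>basis d k. \<Sum>a\<in>basis d (2*n). \<Sum>s\<in>basis d k. \<Sum>b\<in>basis d (2*n).
         cnj (W (r @ keyinv n a)) * Z0 k t X (r @ keyinv n a) (s @ keyinv n b) * W (s @ keyinv n b))"
    proof (rule sum.cong[OF refl])
      fix r assume r: "r \<in> basis d k"
      show "(\<Sum>a\<in>basis d (2*n). \<Sum>s\<in>basis d k. \<Sum>b\<in>basis d (2*n).
         cnj (W (r @ a)) * Z0 k t X (r @ a) (s @ b) * W (s @ b)) =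
        (\<Sum>a\<in>basis d (2*n). \<Sum>s\<in>basis d k. \<Sum>b\<in>basis d (2*n).
         cnj (W (r @ keyinv n a)) * Z0 k t X (r @ keyinv n a) (s @ keyinv n b) * W (s @ keyinv n b))"
        by (subst sum_keyinv) (intro sum.cong refl sum_keyinv)
    qed
    also have "\<dots> = (\<Sum>r\<in>basis d k. \<Sum>a\<in>basis d (2*n). if drop n a = t then
         (\<Sum>s\<in>basis d k. \<Sum>b\<in>basis d (2*n). if drop n b = t then
         cnj (W (r @ keyinv n a)) * X (r @ take n a) (s @ take n b) * W (s @ keyinv n b) else 0) else 0)"
    proof (intro sum.cong refl)
      fix r a assume r: "r \<in> basis d k" and a: "a \<in> basis d (2*n)"
      have "(\<Sum>s\<in>basis d k. \<Sum>b\<in>basis d (2*n).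
         cnj (W (r @ keyinv n a)) * Z0 k t X (r @ keyinv n a) (s @ keyinv n b) * W (s @ keyinv n b)) =
         (\<Sum>s\<in>basis d k. \<Sum>b\<in>basis d (2*n). if drop n a = t then (if drop n b = t then
         cnj (W (r @ keyinv n a)) * X (r @ take n a) (s @ take n b) * W (s @ keyinv n b) else 0) else 0)"
        by (intro sum.cong refl) (simp add: Z0_app[OF r _ a])
      then show "(\<Sum>s\<in>basis d k. \<Sum>b\<in>basis d (2*n).
         cnj (W (r @ keyinv n a)) * Z0 k t X (r @ keyinv n a) (s @ keyinv n b) * W (s @ keyinv n b)) =
         (if drop n a = t then (\<Sum>s\<in>basis d k. \<Sum>b\<in>basis d (2*n). if drop n b = t then
         cnj (W (r @ keyinv n a)) * X (r @ take n a) (s @ take n b) * W (s @ keyinv n b) else 0) else 0)"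
        by (cases "drop n a = t") simp_all
    qed
    also have "\<dots> = (\<Sum>r\<in>basis d k. \<Sum>z\<in>basis d n. \<Sum>s\<in>basis d k. \<Sum>w\<in>basis d n.
         cnj (W (r @ keyinv n (z @ t))) * X (r @ z) (s @ w) * W (s @ keyinv n (w @ t)))"
      using t len_b by (simp add: sum_fiber)
    also have "\<dots> = form d (k+n) X (\<lambda>x. W (take k x @ keyinv n (drop k x @ t)))"
      unfolding form_def sum_basis_add using len_b by simp
    finally show ?thesis .
  qed
  then show ?thesis using X op by (simp add: psd_iff)
qed

definition "swp k R = take k R @ drop (k+n) R @ take n (drop k R)"

lemma swp_basis: "R \<in> basis d (k+n+n) \<Longrightarrow> swp k R \<in> basis d (k+n+n)"
  by (auto simp: swp_def basis_def dest: in_set_takeD in_set_dropD)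

lemma swp_app: "length r = k \<Longrightarrow> length p = n \<Longrightarrow> swp k ((r @ p) @ a) = (r @ a) @ p"
  by (simp add: swp_def)

definition "Z1 k t X = idtensor (k+n) L2 (Z0 k t X)"
definition "Z2 k t X = (\<lambda>R S. if R \<in> basis d (k+n+n) \<and> S \<in> basis d (k+n+n) then Z1 k t X (swp k R) (swp k S) else 0)"
definition "Z3 k t X = idtensor (k+n) L1 (Z2 k t X)"

lemma CP1: "is_channel d n L \<Longrightarrow> psd d (K+n) Z \<Longrightarrow> psd d (K+n) (idtensor K L Z)"
  by (simp add: is_channel_def)

lemma psd_Z3: assumes X: "psd d (k+n) X" and t: "t \<in> basis d n"
  shows "psd d (k+n+n) (Z3 k t X)" "is_op d (k+n+n) (Z0 k t X)" "is_op d (k+n+n) (Z2 k t X)"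
proof -
  have 0: "psd d (k+n+n) (Z0 k t X)" using psd_Z0[OF X t] .
  have 1: "psd d (k+n+n) (Z1 k t X)" unfolding Z1_def using CP1[OF ch2 0] .
  have 2: "psd d (k+n+n) (Z2 k t X)" unfolding Z2_def using psd_pull[OF 1 swp_basis] .
  show "psd d (k+n+n) (Z3 k t X)" unfolding Z3_def using CP1[OF ch1 2] .
  show "is_op d (k+n+n) (Z0 k t X)" using 0 by (simp add: psd_iff)
  show "is_op d (k+n+n) (Z2 k t X)" using 2 by (simp add: psd_iff)
qed

lemma Z3_formula:
  assumes X: "psd d (k+n) X" and t: "t \<in> basis d n" and r: "r \<in> basis d k" and s: "s \<in> basis d k"
    and p1: "p1 \<in> basis d n" and p2: "p2 \<in> basis d n" and q1: "q1 \<in> basis d n" and q2: "q2 \<in> basis d n"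
  shows "Z3 k t X (r @ p2 @ p1) (s @ q2 @ q1) =
    (\<Sum>z\<in>basis d n. \<Sum>w\<in>basis d n. X (r @ z) (s @ w) *
       (L1 (munit d n (map2 hf z t) (map2 hf w t)) p1 q1 * L2 (munit d n (map2 kf z t) (map2 kf w t)) p2 q2))"
proof -
  let ?K1 = "\<lambda>a b. L1 (munit d n a b) p1 q1" and ?K2 = "\<lambda>a b. L2 (munit d n a b) p2 q2"
  have lr: "length r = k" "length s = k" "length p2 = n" "length q2 = n" using r s p2 q2 len_b by auto
  have rp: "r @ p2 \<in> basis d (k+n)" "s @ q2 \<in> basis d (k+n)" using append_in_basis[OF r p2] append_in_basis[OF s q2] by auto
  have "Z3 k t X (r @ p2 @ p1) (s @ q2 @ q1) = Z3 k t X ((r @ p2) @ p1) ((s @ q2) @ q1)" by simp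
  also have "\<dots> = (\<Sum>a1\<in>basis d n. \<Sum>b1\<in>basis d n. Z2 k t X ((r @ p2) @ a1) ((s @ q2) @ b1) * ?K1 a1 b1)"
    unfolding Z3_def by (rule idt_exp[OF ch1 psd_Z3(3)[OF X t] rp])
  also have "\<dots> = (\<Sum>a1\<in>basis d n. \<Sum>b1\<in>basis d n.
      (\<Sum>a2\<in>basis d n. \<Sum>b2\<in>basis d n. Z0 k t X (r @ (a1 @ a2)) (s @ (b1 @ b2)) * ?K2 a2 b2) * ?K1 a1 b1)"
  proof (intro sum.cong refl)
    fix a1 b1 assume a1: "a1 \<in> basis d n" and b1: "b1 \<in> basis d n"
    have ra: "r @ a1 \<in> basis d (k+n)" "s @ b1 \<in> basis d (k+n)" using append_in_basis[OF r a1] append_in_basis[OF s b1] by auto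
    have mem: "(r @ p2) @ a1 \<in> basis d (k+n+n)" "(s @ q2) @ b1 \<in> basis d (k+n+n)"
      using append_in_basis[OF rp(1) a1] append_in_basis[OF rp(2) b1] by auto
    have "Z2 k t X ((r @ p2) @ a1) ((s @ q2) @ b1) = Z1 k t X ((r @ a1) @ p2) ((s @ b1) @ q2)"
      unfolding Z2_def using mem swp_app[OF lr(1) lr(3)] swp_app[OF lr(2) lr(4)] by simp
    also have "\<dots> = (\<Sum>a2\<in>basis d n. \<Sum>b2\<in>basis d n. Z0 k t X ((r @ a1) @ a2) ((s @ b1) @ b2) * ?K2 a2 b2)"
      unfolding Z1_def by (rule idt_exp[OF ch2 psd_Z3(2)[OF X t] ra])
    finally show "Z2 k t X ((r @ p2) @ a1) ((s @ q2) @ b1) * ?K1 a1 b1 =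
      (\<Sum>a2\<in>basis d n. \<Sum>b2\<in>basis d n. Z0 k t X (r @ (a1 @ a2)) (s @ (b1 @ b2)) * ?K2 a2 b2) * ?K1 a1 b1" by simp
  qed
  also have "\<dots> = (\<Sum>a1\<in>basis d n. \<Sum>a2\<in>basis d n. \<Sum>b1\<in>basis d n. \<Sum>b2\<in>basis d n.
      Z0 k t X (r @ (a1 @ a2)) (s @ (b1 @ b2)) * (?K1 (take n (a1 @ a2)) (take n (b1 @ b2)) * ?K2 (drop n (a1 @ a2)) (drop n (b1 @ b2))))"
  proof (rule sum.cong[OF refl])
    fix a1 assume a1: "a1 \<in> basis d n"
    have "(\<Sum>b1\<in>basis d n. (\<Sum>a2\<in>basis d n. \<Sum>b2\<in>basis d n. Z0 k t X (r @ (a1 @ a2)) (s @ (b1 @ b2)) * ?K2 a2 b2) * ?K1 a1 b1)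
      = (\<Sum>b1\<in>basis d n. \<Sum>a2\<in>basis d n. \<Sum>b2\<in>basis d n.
         Z0 k t X (r @ (a1 @ a2)) (s @ (b1 @ b2)) * (?K1 a1 b1 * ?K2 a2 b2))"
      by (simp add: sum_distrib_left sum_distrib_right mult_ac)
    also have "\<dots> = (\<Sum>a2\<in>basis d n. \<Sum>b1\<in>basis d n. \<Sum>b2\<in>basis d n.
         Z0 k t X (r @ (a1 @ a2)) (s @ (b1 @ b2)) * (?K1 a1 b1 * ?K2 a2 b2))"
      by (rule sum.swap)
    also have "\<dots> = (\<Sum>a2\<in>basis d n. \<Sum>b1\<in>basis d n. \<Sum>b2\<in>basis d n.
      Z0 k t X (r @ (a1 @ a2)) (s @ (b1 @ b2)) * (?K1 (take n (a1 @ a2)) (take n (b1 @ b2)) * ?K2 (drop n (a1 @ a2)) (drop n (b1 @ b2))))"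
      using a1 by (intro sum.cong refl) (simp add: len_b)
    finally show "(\<Sum>b1\<in>basis d n. (\<Sum>a2\<in>basis d n. \<Sum>b2\<in>basis d n. Z0 k t X (r @ (a1 @ a2)) (s @ (b1 @ b2)) * ?K2 a2 b2) * ?K1 a1 b1)
      = (\<Sum>a2\<in>basis d n. \<Sum>b1\<in>basis d n. \<Sum>b2\<in>basis d n.
      Z0 k t X (r @ (a1 @ a2)) (s @ (b1 @ b2)) * (?K1 (take n (a1 @ a2)) (take n (b1 @ b2)) * ?K2 (drop n (a1 @ a2)) (drop n (b1 @ b2))))" .
  qed
  also have "\<dots> = (\<Sum>a\<in>basis d (2*n). \<Sum>b\<in>basis d (2*n).
      Z0 k t X (r @ a) (s @ b) * (?K1 (take n a) (take n b) * ?K2 (drop n a) (drop n b)))"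
    unfolding sum_basis_double by (rule refl)
  also have "\<dots> = (\<Sum>a\<in>basis d (2*n). \<Sum>b\<in>basis d (2*n).
      Z0 k t X (r @ keyinv n a) (s @ keyinv n b) *
        (?K1 (take n (keyinv n a)) (take n (keyinv n b)) * ?K2 (drop n (keyinv n a)) (drop n (keyinv n b))))"
    by (subst sum_keyinv) (intro sum.cong refl sum_keyinv)
  also have "\<dots> = (\<Sum>a\<in>basis d (2*n). if drop n a = t then (\<Sum>b\<in>basis d (2*n). if drop n b = t then
      X (r @ take n a) (s @ take n b) *
        (?K1 (take n (keyinv n a)) (take n (keyinv n b)) * ?K2 (drop n (keyinv n a)) (drop n (keyinv n b))) else 0) else 0)"
  proof (rule sum.cong[OF refl])
    fix a assume a: "a \<in> basis d (2*n)"
    show "(\<Sum>b\<in>basis d (2*n).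
      Z0 k t X (r @ keyinv n a) (s @ keyinv n b) *
        (?K1 (take n (keyinv n a)) (take n (keyinv n b)) * ?K2 (drop n (keyinv n a)) (drop n (keyinv n b)))) =
      (if drop n a = t then (\<Sum>b\<in>basis d (2*n). if drop n b = t then
      X (r @ take n a) (s @ take n b) *
        (?K1 (take n (keyinv n a)) (take n (keyinv n b)) * ?K2 (drop n (keyinv n a)) (drop n (keyinv n b))) else 0) else 0)"
      by (cases "drop n a = t") (auto simp: Z0_app[OF r s a] intro!: sum.cong)
  qed
  also have "\<dots> = (\<Sum>z\<in>basis d n. \<Sum>w\<in>basis d n. X (r @ z) (s @ w) *
       (?K1 (map2 hf z t) (map2 hf w t) * ?K2 (map2 kf z t) (map2 kf w t)))"
    using t len_b by (simp add: sum_fiber keyinv_app)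
  finally show ?thesis .
qed

definition Phi :: "nat list \<Rightarrow> nat list \<Rightarrow> qop \<Rightarrow> qop" where
  "Phi t u \<rho> x y = (\<Sum>z\<in>basis d n. \<Sum>w\<in>basis d n.
     \<rho> z w * (L1 (munit d n (map2 hf z t) (map2 hf w t)) (map2 hf x u) (map2 hf y u) *
               L2 (munit d n (map2 kf z t) (map2 kf w t)) (map2 kf x u) (map2 kf y u)))"

lemma FF_Phi: "FF \<rho> x y = (1 / of_nat (d ^ n)) * (\<Sum>t\<in>basis d n. \<Sum>u\<in>basis d n. Phi t u \<rho> x y)"
  unfolding FF_def Phi_def by (subst sum_perm22) (rule refl)

lemma conv_zero_op: "chan_conv d G n L1 L2 (\<lambda>x y. 0) x y = 0"
  by (simp add: chan_conv_def chan_of_choi_def ptrace_A_def mmul_def tens_def transp_def)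

lemma CP_conv:
  assumes n1: "n \<ge> 1" and X: "psd d (k+n) X"
  shows "psd d (k+n) (idtensor k (chan_conv d G n L1 L2) X)"
proof -
  let ?Y = "idtensor k (chan_conv d G n L1 L2) X"
  let ?D = "of_nat (d ^ n) :: complex"
  have Xop: "is_op d (k+n) X" using X by (simp add: psd_iff)
  have op: "is_op d (k+n) ?Y"
    unfolding is_op_def
  proof (intro allI impI)
    fix x y assume xy: "x \<notin> basis d (k+n) \<or> y \<notin> basis d (k+n)"
    show "?Y x y = 0"
    proof (cases "drop k x \<in> basis d n \<and> drop k y \<in> basis d n")
      case False
      then show ?thesis unfolding idtensor_def using chan_conv_zero by blast
    next
      case True
      have lx: "length x = k + n" "length y = k + n" using True n1 by (auto simp: basis_def)
      have lt: "length (take k x) = k" "length (take k y) = k" using lx by auto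
      have "x = take k x @ drop k x" "y = take k y @ drop k y" by simp_all
      then have "take k x \<notin> basis d k \<or> take k y \<notin> basis d k"
        using xy True append_in_basis[of "take k x" d k "drop k x" n] append_in_basis[of "take k y" d k "drop k y" n]
        by metis
      then have blk: "(\<lambda>x' y'. X (take k x @ x') (take k y @ y')) = (\<lambda>x' y'. 0)"
        using Xop append_basis_iff[OF lt(1), of _ d n] append_basis_iff[OF lt(2), of _ d n]
        by (auto simp: is_op_def)
      show ?thesis unfolding idtensor_def blk conv_zero_op ..
    qed
  qed
  have "cnn (form d (k+n) ?Y v)" for v
  proof -
    let ?\<phi> = "\<lambda>u x. take k x @ map2 kf (drop k x) u @ map2 hf (drop k x) u"
    have phi_b: "?\<phi> u x \<in> basis d (k+n+n)" if u: "u \<in> basis d n" and x: "x \<in> basis d (k+n)" for u x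
    proof -
      have "take k x \<in> basis d k" "drop k x \<in> basis d n" using x take_in_basis drop_in_basis by auto
      then show ?thesis using mb[OF _ u] append_in_basis by (metis add.assoc)
    qed
    have eq: "?Y x y = (1 / ?D) * (\<Sum>t\<in>basis d n. \<Sum>u\<in>basis d n. Z3 k t X (?\<phi> u x) (?\<phi> u y))"
      if x: "x \<in> basis d (k+n)" and y: "y \<in> basis d (k+n)" for x y
    proof -
      have tx: "take k x \<in> basis d k" "drop k x \<in> basis d n" "take k y \<in> basis d k" "drop k y \<in> basis d n"
        using x y take_in_basis drop_in_basis by auto
      have "?Y x y = FF (\<lambda>x' y'. X (take k x @ x') (take k y @ y')) (drop k x) (drop k y)"
        unfolding idtensor_def using LHS tx by simp
      also have "\<dots> = (1 / ?D) * (\<Sum>t\<in>basis d n. \<Sum>u\<in>basis d n. Z3 k t X (?\<phi> u x) (?\<phi> u y))"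
        unfolding FF_Phi
      proof (intro arg_cong[where f="\<lambda>z. (1 / ?D) * z"] sum.cong refl)
        fix t u assume t: "t \<in> basis d n" and u: "u \<in> basis d n"
        show "Phi t u (\<lambda>x' y'. X (take k x @ x') (take k y @ y')) (drop k x) (drop k y) = Z3 k t X (?\<phi> u x) (?\<phi> u y)"
          unfolding Phi_def
          using Z3_formula[OF X t tx(1) tx(3) conjunct1[OF mb[OF tx(2) u]] conjunct2[OF mb[OF tx(2) u]]
             conjunct1[OF mb[OF tx(4) u]] conjunct2[OF mb[OF tx(4) u]]] by simp
      qed
      finally show ?thesis .
    qed
    have "form d (k+n) ?Y v = (\<Sum>x\<in>basis d (k+n). \<Sum>y\<in>basis d (k+n). \<Sum>t\<in>basis d n. \<Sum>u\<in>basis d n.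
        (1 / ?D) * (cnj (v x) * Z3 k t X (?\<phi> u x) (?\<phi> u y) * v y))"
      unfolding form_def by (intro sum.cong refl) (simp add: eq sum_distrib_left sum_distrib_right mult_ac)
    also have "\<dots> = (\<Sum>t\<in>basis d n. \<Sum>u\<in>basis d n. \<Sum>x\<in>basis d (k+n). \<Sum>y\<in>basis d (k+n).
        (1 / ?D) * (cnj (v x) * Z3 k t X (?\<phi> u x) (?\<phi> u y) * v y))"
      by (rule sum_perm22)
    also have "\<dots> = (\<Sum>t\<in>basis d n. \<Sum>u\<in>basis d n. (1 / ?D) * (\<Sum>x\<in>basis d (k+n). \<Sum>y\<in>basis d (k+n).
        cnj (v x) * Z3 k t X (?\<phi> u x) (?\<phi> u y) * v y))"
      by (simp add: sum_distrib_left)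
    finally have F: "form d (k+n) ?Y v = \<dots>" .
    show ?thesis unfolding F
    proof (rule cnn_sum, rule cnn_sum, rule cnn_scale)
      fix t u assume t: "t \<in> basis d n" and u: "u \<in> basis d n"
      show "cnn (\<Sum>x\<in>basis d (k+n). \<Sum>y\<in>basis d (k+n). cnj (v x) * Z3 k t X (?\<phi> u x) (?\<phi> u y) * v y)"
        by (rule psd_pull_cnn[OF psd_Z3(1)[OF X t]]) (rule phi_b[OF u])
    qed
  qed
  then show ?thesis using op by (simp add: psd_iff)
qed

end

theorem mainTheorem18:
  fixes d n :: nat and G :: "nat \<Rightarrow> nat \<Rightarrow> int" and \<Lambda>1 \<Lambda>2 :: "qop \<Rightarrow> qop"
  assumes "prime d" and "n \<ge> 1"
    and "nontrivial_G d G" and "invertible_G d G"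
    and "is_channel d n \<Lambda>1" and "is_channel d n \<Lambda>2"
  shows "is_channel d n (chan_conv d G n \<Lambda>1 \<Lambda>2) \<and>
         (\<forall>\<rho>. is_op d n \<rho> \<longrightarrow>
            (\<forall>x\<in>basis d n. \<forall>y\<in>basis d n.
               chan_conv d G n \<Lambda>1 \<Lambda>2 \<rho> x y =
               Emap d G n (chan_tensor d n \<Lambda>1 \<Lambda>2 (Einv d G n \<rho>)) x y))"
proof -
  interpret cset d G n \<Lambda>1 \<Lambda>2
    by unfold_locales (use assms in auto)
  have ch: "is_channel d n (chan_conv d G n \<Lambda>1 \<Lambda>2)"
    unfolding is_channel_def
  proof (intro conjI allI impI)
    fix A B c
    show "chan_conv d G n \<Lambda>1 \<Lambda>2 (\<lambda>x y. c * A x y + B x y) =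
          (\<lambda>x y. c * chan_conv d G n \<Lambda>1 \<Lambda>2 A x y + chan_conv d G n \<Lambda>1 \<Lambda>2 B x y)"
      unfolding chan_conv_def by (rule chan_of_choi_lin)
  next
    fix A show "is_op d n (chan_conv d G n \<Lambda>1 \<Lambda>2 A)"
      unfolding is_op_def using chan_conv_zero by blast
  next
    fix A show "trace d n (chan_conv d G n \<Lambda>1 \<Lambda>2 A) = trace d n A" by (rule trace_conv)
  next
    fix k X assume "psd d (k + n) X"
    then show "psd d (k + n) (idtensor k (chan_conv d G n \<Lambda>1 \<Lambda>2) X)"
      using CP_conv assms(2) by blast
  qed
  show ?thesis using ch LHS RHS by simp
qed

end
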